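(* Let $J$ be a locally profinite group and $J^1$ a compact normal subgroup. Let $A$ be a finite length local $W(\overline{\mathbb{F}}_l)$-algebra with residue field $\overline{\mathbb{F}}_l$, and let $\eta_A$ be a finite-dimensional representation of $J^1$ over $A$ such that $\eta_A\otimes_A\overline{\mathbb{F}}_l$ is irreducible. Suppose $\eta_A$ extends to an $A$-representation $\Lambda_A$ of $J$. Then any other extension $\Lambda'_A$ of $\eta_A$ to a representation of $J$ is isomorphic to the twist of $\Lambda_A$ by a character of $J/J^1$ (with values in $A^\times$). *)

theory Defs
  imports "HOL-Algebra.QuotRing" "HOL-Analysis.Product_Topology" "HOL-Analysis.T1_Spaces" "HOL-Computational_Algebra.Primes"
begin

definition topological_group :: "'g monoid \<Rightarrow> 'g topology \<Rightarrow> bool" where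
  "topological_group G T \<longleftrightarrow> group G \<and> topspace T = carrier G \<and>
     continuous_map (prod_topology T T) T (\<lambda>(x, y). x \<otimes>\<^bsub>G\<^esub> y) \<and>
     continuous_map T T (\<lambda>x. inv\<^bsub>G\<^esub> x)"

definition locally_profinite :: "'g monoid \<Rightarrow> 'g topology \<Rightarrow> bool" where
  "locally_profinite G T \<longleftrightarrow> topological_group G T \<and> Hausdorff_space T \<and>
     (\<forall>U. openin T U \<and> \<one>\<^bsub>G\<^esub> \<in> U \<longrightarrow>
        (\<exists>K. subgroup K G \<and> openin T K \<and> compactin T K \<and> K \<subseteq> U))"

text \<open>W is characterised (up to isomorphism) as the complete discrete valuation ring
  of characteristic 0 with uniformiser l whose residue field W/lW is an algebraic
  closure of F_l (algebraically closed, and every element lies in some F_(l^k)).\<close>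
definition witt_Fbar :: "'w ring \<Rightarrow> nat \<Rightarrow> bool" where
  "witt_Fbar W l \<longleftrightarrow> domain W \<and> prime l \<and>
    (let p = add_pow W l \<one>\<^bsub>W\<^esub> in
      (\<forall>k::nat. k > 0 \<longrightarrow> add_pow W k \<one>\<^bsub>W\<^esub> \<noteq> \<zero>\<^bsub>W\<^esub>) \<and>
      p \<notin> Units W \<and>
      (\<forall>x \<in> carrier W - {\<zero>\<^bsub>W\<^esub>}. \<exists>u \<in> Units W. \<exists>k::nat. x = u \<otimes>\<^bsub>W\<^esub> (p [^]\<^bsub>W\<^esub> k)) \<and>
      (\<forall>x::nat \<Rightarrow> 'w. (\<forall>k. x k \<in> carrier W) \<and>
           (\<forall>k. \<exists>c \<in> carrier W. x (Suc k) \<ominus>\<^bsub>W\<^esub> x k = (p [^]\<^bsub>W\<^esub> k) \<otimes>\<^bsub>W\<^esub> c) \<longrightarrow>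
         (\<exists>y \<in> carrier W. \<forall>k. \<exists>c \<in> carrier W. y \<ominus>\<^bsub>W\<^esub> x k = (p [^]\<^bsub>W\<^esub> k) \<otimes>\<^bsub>W\<^esub> c)) \<and>
      (\<forall>m::nat. m \<ge> 1 \<longrightarrow> (\<forall>c \<in> {..<m} \<rightarrow> carrier W. \<exists>x \<in> carrier W. \<exists>d \<in> carrier W.
          x [^]\<^bsub>W\<^esub> m \<oplus>\<^bsub>W\<^esub> (\<Oplus>\<^bsub>W\<^esub> i\<in>{..<m}. c i \<otimes>\<^bsub>W\<^esub> x [^]\<^bsub>W\<^esub> i) = p \<otimes>\<^bsub>W\<^esub> d)) \<and>
      (\<forall>x \<in> carrier W. \<exists>k::nat. k \<ge> 1 \<and> (\<exists>d \<in> carrier W.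
          x [^]\<^bsub>W\<^esub> (l ^ k) \<ominus>\<^bsub>W\<^esub> x = p \<otimes>\<^bsub>W\<^esub> d)))"

definition max_ideal :: "'a ring \<Rightarrow> 'a set" where
  "max_ideal A = carrier A - Units A"

definition local_ring :: "'a ring \<Rightarrow> bool" where
  "local_ring A \<longleftrightarrow> cring A \<and> \<one>\<^bsub>A\<^esub> \<noteq> \<zero>\<^bsub>A\<^esub> \<and> ideal (max_ideal A) A"

definition W_submodule :: "'w ring \<Rightarrow> 'a ring \<Rightarrow> ('w \<Rightarrow> 'a) \<Rightarrow> 'a set \<Rightarrow> bool" where
  "W_submodule W A \<phi> S \<longleftrightarrow> S \<subseteq> carrier A \<and> \<zero>\<^bsub>A\<^esub> \<in> S \<and>
     (\<forall>x\<in>S. \<forall>y\<in>S. x \<oplus>\<^bsub>A\<^esub> y \<in> S) \<and> (\<forall>w\<in>carrier W. \<forall>x\<in>S. \<phi> w \<otimes>\<^bsub>A\<^esub> x \<in> S)"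

definition W_finite_length :: "'w ring \<Rightarrow> 'a ring \<Rightarrow> ('w \<Rightarrow> 'a) \<Rightarrow> bool" where
  "W_finite_length W A \<phi> \<longleftrightarrow> (\<exists>N::nat. \<forall>M::nat \<Rightarrow> 'a set. \<forall>k::nat.
     (\<forall>i\<le>k. W_submodule W A \<phi> (M i)) \<and> (\<forall>i<k. M i \<subset> M (Suc i)) \<longrightarrow> k \<le> N)"

text \<open>A finite length local W-algebra (structure map phi) whose residue field is
  W/lW via phi, i.e. phi induces a surjection onto the residue field.\<close>
definition fin_length_local_W_alg :: "'w ring \<Rightarrow> 'a ring \<Rightarrow> ('w \<Rightarrow> 'a) \<Rightarrow> bool" where
  "fin_length_local_W_alg W A \<phi> \<longleftrightarrow> local_ring A \<and> \<phi> \<in> ring_hom W A \<and>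
     W_finite_length W A \<phi> \<and>
     (\<forall>a\<in>carrier A. \<exists>w\<in>carrier W. a \<ominus>\<^bsub>A\<^esub> \<phi> w \<in> max_ideal A)"

definition vec_carrier :: "('a,'b) ring_scheme \<Rightarrow> nat \<Rightarrow> (nat \<Rightarrow> 'a) set" where
  "vec_carrier R n = {..<n} \<rightarrow>\<^sub>E carrier R"

definition mat_carrier :: "('a,'b) ring_scheme \<Rightarrow> nat \<Rightarrow> (nat \<times> nat \<Rightarrow> 'a) set" where
  "mat_carrier R n = ({..<n} \<times> {..<n}) \<rightarrow>\<^sub>E carrier R"

definition mat_mul :: "('a,'b) ring_scheme \<Rightarrow> nat \<Rightarrow> (nat \<times> nat \<Rightarrow> 'a) \<Rightarrow> (nat \<times> nat \<Rightarrow> 'a) \<Rightarrow> (nat \<times> nat \<Rightarrow> 'a)" where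
  "mat_mul R n M N = (\<lambda>p\<in>{..<n} \<times> {..<n}. \<Oplus>\<^bsub>R\<^esub> k\<in>{..<n}. M (fst p, k) \<otimes>\<^bsub>R\<^esub> N (k, snd p))"

definition mat_one :: "('a,'b) ring_scheme \<Rightarrow> nat \<Rightarrow> (nat \<times> nat \<Rightarrow> 'a)" where
  "mat_one R n = (\<lambda>p\<in>{..<n} \<times> {..<n}. if fst p = snd p then \<one>\<^bsub>R\<^esub> else \<zero>\<^bsub>R\<^esub>)"

definition GL :: "('a,'b) ring_scheme \<Rightarrow> nat \<Rightarrow> (nat \<times> nat \<Rightarrow> 'a) set" where
  "GL R n = {M \<in> mat_carrier R n. \<exists>N \<in> mat_carrier R n.
              mat_mul R n M N = mat_one R n \<and> mat_mul R n N M = mat_one R n}"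

definition mat_smult :: "('a,'b) ring_scheme \<Rightarrow> nat \<Rightarrow> 'a \<Rightarrow> (nat \<times> nat \<Rightarrow> 'a) \<Rightarrow> (nat \<times> nat \<Rightarrow> 'a)" where
  "mat_smult R n c M = (\<lambda>p\<in>{..<n} \<times> {..<n}. c \<otimes>\<^bsub>R\<^esub> M p)"

definition mat_vec :: "('a,'b) ring_scheme \<Rightarrow> nat \<Rightarrow> (nat \<times> nat \<Rightarrow> 'a) \<Rightarrow> (nat \<Rightarrow> 'a) \<Rightarrow> (nat \<Rightarrow> 'a)" where
  "mat_vec R n M v = (\<lambda>i\<in>{..<n}. \<Oplus>\<^bsub>R\<^esub> k\<in>{..<n}. M (i, k) \<otimes>\<^bsub>R\<^esub> v k)"

definition vec_add :: "('a,'b) ring_scheme \<Rightarrow> nat \<Rightarrow> (nat \<Rightarrow> 'a) \<Rightarrow> (nat \<Rightarrow> 'a) \<Rightarrow> (nat \<Rightarrow> 'a)" where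
  "vec_add R n v w = (\<lambda>i\<in>{..<n}. v i \<oplus>\<^bsub>R\<^esub> w i)"

definition vec_smult :: "('a,'b) ring_scheme \<Rightarrow> nat \<Rightarrow> 'a \<Rightarrow> (nat \<Rightarrow> 'a) \<Rightarrow> (nat \<Rightarrow> 'a)" where
  "vec_smult R n c v = (\<lambda>i\<in>{..<n}. c \<otimes>\<^bsub>R\<^esub> v i)"

definition vec_zero :: "('a,'b) ring_scheme \<Rightarrow> nat \<Rightarrow> (nat \<Rightarrow> 'a)" where
  "vec_zero R n = (\<lambda>i\<in>{..<n}. \<zero>\<^bsub>R\<^esub>)"

definition smooth_rep :: "'g monoid \<Rightarrow> 'g topology \<Rightarrow> 'a ring \<Rightarrow> nat \<Rightarrow> 'g set \<Rightarrow> ('g \<Rightarrow> nat \<times> nat \<Rightarrow> 'a) \<Rightarrow> bool" where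
  "smooth_rep G T R n H \<rho> \<longleftrightarrow>
     (\<forall>g\<in>H. \<rho> g \<in> GL R n) \<and>
     (\<forall>g\<in>H. \<forall>h\<in>H. \<rho> (g \<otimes>\<^bsub>G\<^esub> h) = mat_mul R n (\<rho> g) (\<rho> h)) \<and>
     (\<forall>v\<in>vec_carrier R n. openin (subtopology T H) {g\<in>H. mat_vec R n (\<rho> g) v = v})"

definition reduce_mat :: "'a ring \<Rightarrow> nat \<Rightarrow> (nat \<times> nat \<Rightarrow> 'a) \<Rightarrow> (nat \<times> nat \<Rightarrow> 'a set)" where
  "reduce_mat A n M = (\<lambda>p\<in>{..<n} \<times> {..<n}. max_ideal A +>\<^bsub>A\<^esub> M p)"

definition irreducible_rep :: "'k ring \<Rightarrow> nat \<Rightarrow> 'g set \<Rightarrow> ('g \<Rightarrow> nat \<times> nat \<Rightarrow> 'k) \<Rightarrow> bool" where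
  "irreducible_rep K n H \<rho> \<longleftrightarrow> n > 0 \<and>
     (\<forall>S. S \<subseteq> vec_carrier K n \<and> vec_zero K n \<in> S \<and>
          (\<forall>v\<in>S. \<forall>w\<in>S. vec_add K n v w \<in> S) \<and>
          (\<forall>c\<in>carrier K. \<forall>v\<in>S. vec_smult K n c v \<in> S) \<and>
          (\<forall>g\<in>H. \<forall>v\<in>S. mat_vec K n (\<rho> g) v \<in> S)
        \<longrightarrow> S = {vec_zero K n} \<or> S = vec_carrier K n)"

text \<open>eta tensor_A F_l-bar is irreducible.\<close>
definition residually_irreducible :: "'a ring \<Rightarrow> nat \<Rightarrow> 'g set \<Rightarrow> ('g \<Rightarrow> nat \<times> nat \<Rightarrow> 'a) \<Rightarrow> bool" where
  "residually_irreducible A n H \<rho> \<longleftrightarrow>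
     irreducible_rep (A Quot (max_ideal A)) n H (\<lambda>g. reduce_mat A n (\<rho> g))"

text \<open>A smooth character of J/J1 with values in A^x, viewed as a function on J.\<close>
definition smooth_char_quot :: "'g monoid \<Rightarrow> 'g topology \<Rightarrow> 'a ring \<Rightarrow> 'g set \<Rightarrow> ('g \<Rightarrow> 'a) \<Rightarrow> bool" where
  "smooth_char_quot G T A N \<chi> \<longleftrightarrow>
     (\<forall>g\<in>carrier G. \<chi> g \<in> Units A) \<and>
     (\<forall>g\<in>carrier G. \<forall>h\<in>carrier G. \<chi> (g \<otimes>\<^bsub>G\<^esub> h) = \<chi> g \<otimes>\<^bsub>A\<^esub> \<chi> h) \<and>
     (\<forall>g\<in>N. \<chi> g = \<one>\<^bsub>A\<^esub>) \<and>
     openin T {g\<in>carrier G. \<chi> g = \<one>\<^bsub>A\<^esub>}"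

end

theory Submission
  imports Defs
begin
lemma mat_carrierD: "M \<in> mat_carrier R n \<Longrightarrow> i < n \<Longrightarrow> j < n \<Longrightarrow> M (i,j) \<in> carrier R"
  unfolding mat_carrier_def by (auto simp: PiE_iff)

lemma mat_eqI: "M \<in> mat_carrier R n \<Longrightarrow> N \<in> mat_carrier R n \<Longrightarrow> (\<And>i j. i < n \<Longrightarrow> j < n \<Longrightarrow> M (i,j) = N (i,j)) \<Longrightarrow> M = N"
  unfolding mat_carrier_def by (rule PiE_ext) auto

lemma vec_carrierD: "v \<in> vec_carrier R n \<Longrightarrow> i < n \<Longrightarrow> v i \<in> carrier R"
  unfolding vec_carrier_def by (auto simp: PiE_iff)

lemma vec_eqI: "v \<in> vec_carrier R n \<Longrightarrow> w \<in> vec_carrier R n \<Longrightarrow> (\<And>i. i < n \<Longrightarrow> v i = w i) \<Longrightarrow> v = w"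
  unfolding vec_carrier_def by (rule PiE_ext) auto

lemma mat_mul_entry: "i < n \<Longrightarrow> j < n \<Longrightarrow> mat_mul R n M N (i,j) = (\<Oplus>\<^bsub>R\<^esub> k\<in>{..<n}. M (i, k) \<otimes>\<^bsub>R\<^esub> N (k, j))"
  by (simp add: mat_mul_def)
lemma mat_one_entry: "i < n \<Longrightarrow> j < n \<Longrightarrow> mat_one R n (i,j) = (if i = j then \<one>\<^bsub>R\<^esub> else \<zero>\<^bsub>R\<^esub>)"
  by (simp add: mat_one_def)
lemma mat_smult_entry: "i < n \<Longrightarrow> j < n \<Longrightarrow> mat_smult R n c M (i,j) = c \<otimes>\<^bsub>R\<^esub> M (i,j)"
  by (simp add: mat_smult_def)
lemma mat_vec_entry: "i < n \<Longrightarrow> mat_vec R n M v i = (\<Oplus>\<^bsub>R\<^esub> k\<in>{..<n}. M (i, k) \<otimes>\<^bsub>R\<^esub> v k)"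
  by (simp add: mat_vec_def)
lemma vec_add_entry: "i < n \<Longrightarrow> vec_add R n v w i = v i \<oplus>\<^bsub>R\<^esub> w i"
  by (simp add: vec_add_def)
lemma vec_smult_entry: "i < n \<Longrightarrow> vec_smult R n c v i = c \<otimes>\<^bsub>R\<^esub> v i"
  by (simp add: vec_smult_def)
lemma vec_zero_entry: "i < n \<Longrightarrow> vec_zero R n i = \<zero>\<^bsub>R\<^esub>"
  by (simp add: vec_zero_def)

lemmas entries = mat_mul_entry mat_one_entry mat_smult_entry mat_vec_entry vec_add_entry
  vec_smult_entry vec_zero_entry

context cring
begin

lemma finsum_swap:
  assumes "finite A" "finite B" "\<And>i j. i \<in> A \<Longrightarrow> j \<in> B \<Longrightarrow> f i j \<in> carrier R"
  shows "(\<Oplus>i\<in>A. \<Oplus>j\<in>B. f i j) = (\<Oplus>j\<in>B. \<Oplus>i\<in>A. f i j)"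
  using assms
proof (induct A rule: finite_induct)
  case empty
  then show ?case by (simp add: finsum_zero)
next
  case (insert x F)
  have "(\<Oplus>i\<in>insert x F. \<Oplus>j\<in>B. f i j) = (\<Oplus>j\<in>B. f x j) \<oplus> (\<Oplus>i\<in>F. \<Oplus>j\<in>B. f i j)"
    using insert by (intro finsum_insert) (auto intro!: finsum_closed)
  also have "\<dots> = (\<Oplus>j\<in>B. f x j) \<oplus> (\<Oplus>j\<in>B. \<Oplus>i\<in>F. f i j)"
    using insert by simp
  also have "\<dots> = (\<Oplus>j\<in>B. f x j \<oplus> (\<Oplus>i\<in>F. f i j))"
    using insert by (intro finsum_addf[symmetric]) (auto intro!: finsum_closed)
  also have "\<dots> = (\<Oplus>j\<in>B. \<Oplus>i\<in>insert x F. f i j)"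
    using insert by (intro finsum_cong) (auto intro!: finsum_closed simp: finsum_insert)
  finally show ?case .
qed

lemma mat_mul_closed: "M \<in> mat_carrier R n \<Longrightarrow> N \<in> mat_carrier R n \<Longrightarrow> mat_mul R n M N \<in> mat_carrier R n"
  unfolding mat_mul_def mat_carrier_def
  by (auto simp: PiE_iff intro!: finsum_closed)

lemma mat_one_closed: "mat_one R n \<in> mat_carrier R n"
  unfolding mat_one_def mat_carrier_def by (auto simp: PiE_iff)

lemma mat_smult_closed: "c \<in> carrier R \<Longrightarrow> M \<in> mat_carrier R n \<Longrightarrow> mat_smult R n c M \<in> mat_carrier R n"
  unfolding mat_smult_def mat_carrier_def by (auto simp: PiE_iff)

lemma mat_vec_closed: "M \<in> mat_carrier R n \<Longrightarrow> v \<in> vec_carrier R n \<Longrightarrow> mat_vec R n M v \<in> vec_carrier R n"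
  unfolding mat_vec_def vec_carrier_def mat_carrier_def
  by (auto simp: PiE_iff intro!: finsum_closed)

lemma vec_add_closed: "v \<in> vec_carrier R n \<Longrightarrow> w \<in> vec_carrier R n \<Longrightarrow> vec_add R n v w \<in> vec_carrier R n"
  unfolding vec_add_def vec_carrier_def by (auto simp: PiE_iff)

lemma vec_smult_closed: "c \<in> carrier R \<Longrightarrow> v \<in> vec_carrier R n \<Longrightarrow> vec_smult R n c v \<in> vec_carrier R n"
  unfolding vec_smult_def vec_carrier_def by (auto simp: PiE_iff)

lemma vec_zero_closed: "vec_zero R n \<in> vec_carrier R n"
  unfolding vec_zero_def vec_carrier_def by (auto simp: PiE_iff)

lemma mat_mul_assoc:
  assumes M: "M \<in> mat_carrier R n" and N: "N \<in> mat_carrier R n" and P: "P \<in> mat_carrier R n"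
  shows "mat_mul R n (mat_mul R n M N) P = mat_mul R n M (mat_mul R n N P)"
proof (rule mat_eqI[OF mat_mul_closed mat_mul_closed])
  fix i j assume ij: "i < n" "j < n"
  note cM = mat_carrierD[OF M] and cN = mat_carrierD[OF N] and cP = mat_carrierD[OF P]
  have "mat_mul R n (mat_mul R n M N) P (i,j) = (\<Oplus>k\<in>{..<n}. (\<Oplus>l\<in>{..<n}. M(i,l) \<otimes> N(l,k)) \<otimes> P(k,j))"
    using ij cM cN cP by (auto simp: mat_mul_entry intro!: finsum_cong finsum_closed)
  also have "\<dots> = (\<Oplus>k\<in>{..<n}. \<Oplus>l\<in>{..<n}. M(i,l) \<otimes> N(l,k) \<otimes> P(k,j))"
    using ij cM cN cP by (intro finsum_cong refl) (auto simp: finsum_ldistr)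
  also have "\<dots> = (\<Oplus>l\<in>{..<n}. \<Oplus>k\<in>{..<n}. M(i,l) \<otimes> N(l,k) \<otimes> P(k,j))"
    using ij cM cN cP by (intro finsum_swap) auto
  also have "\<dots> = (\<Oplus>l\<in>{..<n}. M(i,l) \<otimes> (\<Oplus>k\<in>{..<n}. N(l,k) \<otimes> P(k,j)))"
    using ij cM cN cP by (intro finsum_cong refl) (auto simp: finsum_rdistr m_assoc simp_implies_def intro!: finsum_cong)
  also have "\<dots> = mat_mul R n M (mat_mul R n N P) (i,j)"
    using ij cM cN cP by (auto simp: mat_mul_entry simp_implies_def intro!: finsum_cong finsum_closed)
  finally show "mat_mul R n (mat_mul R n M N) P (i,j) = mat_mul R n M (mat_mul R n N P) (i,j)" .
qed (use assms in \<open>auto intro: mat_mul_closed\<close>)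

lemma mat_one_left:
  assumes M: "M \<in> mat_carrier R n"
  shows "mat_mul R n (mat_one R n) M = M"
proof (rule mat_eqI[OF mat_mul_closed[OF mat_one_closed M] M])
  fix i j assume ij: "i < n" "j < n"
  note cM = mat_carrierD[OF M]
  have "mat_mul R n (mat_one R n) M (i,j) = (\<Oplus>k\<in>{..<n}. if i = k then M(k,j) else \<zero>)"
    using ij cM by (auto simp: mat_mul_entry mat_one_entry simp_implies_def intro!: finsum_cong)
  also have "\<dots> = M(i,j)" using ij cM by (intro finsum_singleton) auto
  finally show "mat_mul R n (mat_one R n) M (i,j) = M(i,j)" .
qed

lemma mat_one_right:
  assumes M: "M \<in> mat_carrier R n"
  shows "mat_mul R n M (mat_one R n) = M"
proof (rule mat_eqI[OF mat_mul_closed[OF M mat_one_closed] M])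
  fix i j assume ij: "i < n" "j < n"
  note cM = mat_carrierD[OF M]
  have "mat_mul R n M (mat_one R n) (i,j) = (\<Oplus>k\<in>{..<n}. if j = k then M(i,k) else \<zero>)"
    using ij cM by (auto simp: mat_mul_entry mat_one_entry simp_implies_def intro!: finsum_cong)
  also have "\<dots> = M(i,j)" using ij cM by (intro finsum_singleton) auto
  finally show "mat_mul R n M (mat_one R n) (i,j) = M(i,j)" .
qed

lemma mat_smult_mul_left:
  assumes c: "c \<in> carrier R" and M: "M \<in> mat_carrier R n" and N: "N \<in> mat_carrier R n"
  shows "mat_mul R n (mat_smult R n c M) N = mat_smult R n c (mat_mul R n M N)"
proof (rule mat_eqI[OF mat_mul_closed[OF mat_smult_closed[OF c M] N] mat_smult_closed[OF c mat_mul_closed[OF M N]]])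
  fix i j assume ij: "i < n" "j < n"
  note cM = mat_carrierD[OF M] and cN = mat_carrierD[OF N]
  show "mat_mul R n (mat_smult R n c M) N (i,j) = mat_smult R n c (mat_mul R n M N) (i,j)"
    using ij cM cN c by (simp add: mat_mul_entry mat_smult_entry finsum_rdistr m_assoc cong: finsum_cong)
qed

lemma mat_smult_mul_right:
  assumes c: "c \<in> carrier R" and M: "M \<in> mat_carrier R n" and N: "N \<in> mat_carrier R n"
  shows "mat_mul R n M (mat_smult R n c N) = mat_smult R n c (mat_mul R n M N)"
proof (rule mat_eqI[OF mat_mul_closed[OF M mat_smult_closed[OF c N]] mat_smult_closed[OF c mat_mul_closed[OF M N]]])
  fix i j assume ij: "i < n" "j < n"
  note cM = mat_carrierD[OF M] and cN = mat_carrierD[OF N]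
  have "\<And>k. k < n \<Longrightarrow> M (i,k) \<otimes> (c \<otimes> N (k,j)) = c \<otimes> (M (i,k) \<otimes> N (k,j))"
    using ij cM cN c by (simp add: m_lcomm)
  then show "mat_mul R n M (mat_smult R n c N) (i,j) = mat_smult R n c (mat_mul R n M N) (i,j)"
    using ij cM cN c by (simp add: mat_mul_entry mat_smult_entry finsum_rdistr cong: finsum_cong)
qed

lemma mat_smult_smult:
  assumes c: "c \<in> carrier R" and d: "d \<in> carrier R" and M: "M \<in> mat_carrier R n"
  shows "mat_smult R n c (mat_smult R n d M) = mat_smult R n (c \<otimes> d) M"
  using assms by (intro mat_eqI) (auto simp: mat_smult_entry m_assoc mat_carrierD intro!: mat_smult_closed)

lemma mat_smult_one: "M \<in> mat_carrier R n \<Longrightarrow> mat_smult R n \<one> M = M"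
  by (intro mat_eqI) (auto simp: mat_smult_entry mat_carrierD intro!: mat_smult_closed)

lemma mat_vec_mul:
  assumes M: "M \<in> mat_carrier R n" and N: "N \<in> mat_carrier R n" and v: "v \<in> vec_carrier R n"
  shows "mat_vec R n (mat_mul R n M N) v = mat_vec R n M (mat_vec R n N v)"
proof (rule vec_eqI[OF mat_vec_closed[OF mat_mul_closed[OF M N] v] mat_vec_closed[OF M mat_vec_closed[OF N v]]])
  fix i assume i: "i < n"
  note cM = mat_carrierD[OF M] and cN = mat_carrierD[OF N] and cv = vec_carrierD[OF v]
  have "mat_vec R n (mat_mul R n M N) v i = (\<Oplus>k\<in>{..<n}. (\<Oplus>l\<in>{..<n}. M(i,l) \<otimes> N(l,k)) \<otimes> v k)"
    using i cM cN cv by (auto simp: mat_vec_entry mat_mul_entry intro!: finsum_cong finsum_closed)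
  also have "\<dots> = (\<Oplus>k\<in>{..<n}. \<Oplus>l\<in>{..<n}. M(i,l) \<otimes> N(l,k) \<otimes> v k)"
    using i cM cN cv by (intro finsum_cong refl) (auto simp: finsum_ldistr)
  also have "\<dots> = (\<Oplus>l\<in>{..<n}. \<Oplus>k\<in>{..<n}. M(i,l) \<otimes> N(l,k) \<otimes> v k)"
    using i cM cN cv by (intro finsum_swap) auto
  also have "\<dots> = (\<Oplus>l\<in>{..<n}. M(i,l) \<otimes> (\<Oplus>k\<in>{..<n}. N(l,k) \<otimes> v k))"
    using i cM cN cv by (intro finsum_cong refl) (auto simp: finsum_rdistr m_assoc simp_implies_def intro!: finsum_cong)
  also have "\<dots> = mat_vec R n M (mat_vec R n N v) i"
    using i cM cN cv by (auto simp: mat_vec_entry simp_implies_def intro!: finsum_cong finsum_closed)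
  finally show "mat_vec R n (mat_mul R n M N) v i = mat_vec R n M (mat_vec R n N v) i" .
qed

lemma mat_vec_add:
  assumes M: "M \<in> mat_carrier R n" and v: "v \<in> vec_carrier R n" and w: "w \<in> vec_carrier R n"
  shows "mat_vec R n M (vec_add R n v w) = vec_add R n (mat_vec R n M v) (mat_vec R n M w)"
proof (rule vec_eqI[OF mat_vec_closed[OF M vec_add_closed[OF v w]] vec_add_closed[OF mat_vec_closed[OF M v] mat_vec_closed[OF M w]]])
  fix i assume i: "i < n"
  note cM = mat_carrierD[OF M] and cv = vec_carrierD[OF v] and cw = vec_carrierD[OF w]
  show "mat_vec R n M (vec_add R n v w) i = vec_add R n (mat_vec R n M v) (mat_vec R n M w) i"
    using i cM cv cw by (simp add: mat_vec_entry vec_add_entry r_distr finsum_addf cong: finsum_cong)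
qed

lemma mat_vec_smult:
  assumes M: "M \<in> mat_carrier R n" and c: "c \<in> carrier R" and v: "v \<in> vec_carrier R n"
  shows "mat_vec R n M (vec_smult R n c v) = vec_smult R n c (mat_vec R n M v)"
proof (rule vec_eqI[OF mat_vec_closed[OF M vec_smult_closed[OF c v]] vec_smult_closed[OF c mat_vec_closed[OF M v]]])
  fix i assume i: "i < n"
  note cM = mat_carrierD[OF M] and cv = vec_carrierD[OF v]
  have "\<And>k. k < n \<Longrightarrow> M (i,k) \<otimes> (c \<otimes> v k) = c \<otimes> (M (i,k) \<otimes> v k)"
    using i cM cv c by (simp add: m_lcomm)
  then show "mat_vec R n M (vec_smult R n c v) i = vec_smult R n c (mat_vec R n M v) i"
    using i cM cv c by (simp add: mat_vec_entry vec_smult_entry finsum_rdistr cong: finsum_cong)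
qed

lemma mat_vec_zero:
  assumes M: "M \<in> mat_carrier R n"
  shows "mat_vec R n M (vec_zero R n) = vec_zero R n"
  using assms by (intro vec_eqI[of _ R n] mat_vec_closed vec_zero_closed) (auto simp: mat_vec_entry vec_zero_entry mat_carrierD finsum_zero cong: finsum_cong)

definition unitv :: "nat \<Rightarrow> nat \<Rightarrow> (nat \<Rightarrow> 'a)" where
  "unitv n j = (\<lambda>k\<in>{..<n}. if k = j then \<one> else \<zero>)"

lemma unitv_closed: "unitv n j \<in> vec_carrier R n"
  unfolding unitv_def vec_carrier_def by auto

lemma mat_vec_unitv:
  assumes M: "M \<in> mat_carrier R n" and i: "i < n" and j: "j < n"
  shows "mat_vec R n M (unitv n j) i = M (i,j)"
proof -
  note cM = mat_carrierD[OF M]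
  have "mat_vec R n M (unitv n j) i = (\<Oplus>k\<in>{..<n}. if j = k then M(i,k) else \<zero>)"
    using i j cM by (auto simp: mat_vec_entry unitv_def simp_implies_def intro!: finsum_cong)
  also have "\<dots> = M(i,j)" using i j cM by (intro finsum_singleton) auto
  finally show ?thesis .
qed

lemma mat_eq_by_unitv:
  assumes "M \<in> mat_carrier R n" "N \<in> mat_carrier R n"
    and "\<And>j. j < n \<Longrightarrow> mat_vec R n M (unitv n j) = mat_vec R n N (unitv n j)"
  shows "M = N"
proof (rule mat_eqI[OF assms(1,2)])
  fix i j assume "i < n" "j < n"
  then show "M (i,j) = N (i,j)" using assms(3)[of j] mat_vec_unitv[OF assms(1), of i j] mat_vec_unitv[OF assms(2), of i j] by simp
qed

lemma mat_vec_one: "v \<in> vec_carrier R n \<Longrightarrow> mat_vec R n (mat_one R n) v = v"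
proof (rule vec_eqI[OF mat_vec_closed[OF mat_one_closed]])
  fix i assume v: "v \<in> vec_carrier R n" and i: "i < n"
  note cv = vec_carrierD[OF v]
  have "mat_vec R n (mat_one R n) v i = (\<Oplus>k\<in>{..<n}. if i = k then v k else \<zero>)"
    using i cv by (auto simp: mat_vec_entry mat_one_entry simp_implies_def intro!: finsum_cong)
  also have "\<dots> = v i" using i cv by (intro finsum_singleton) auto
  finally show "mat_vec R n (mat_one R n) v i = v i" .
qed auto

end

context field
begin

lemma dependent:
  assumes "finite I" "m < card I" "\<forall>i\<in>I. \<forall>k<m. v i k \<in> carrier R"
  shows "\<exists>c. (\<forall>i\<in>I. c i \<in> carrier R) \<and> (\<exists>i\<in>I. c i \<noteq> \<zero>) \<and> (\<forall>k<m. (\<Oplus>i\<in>I. c i \<otimes> v i k) = \<zero>)"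
  using assms
proof (induct m arbitrary: I v)
  case 0
  then obtain i where "i \<in> I" by (metis card.empty ex_in_conv less_irrefl)
  then show ?case by (intro exI[of _ "\<lambda>_. \<one>"]) auto
next
  case (Suc m)
  show ?case
  proof (cases "\<forall>i\<in>I. v i m = \<zero>")
    case True
    have "m < card I" using Suc.prems by simp
    then obtain c where c: "\<forall>i\<in>I. c i \<in> carrier R" "\<exists>i\<in>I. c i \<noteq> \<zero>" "\<forall>k<m. (\<Oplus>i\<in>I. c i \<otimes> v i k) = \<zero>"
      using Suc.hyps[of I v] Suc.prems by auto
    have "\<forall>k<Suc m. (\<Oplus>i\<in>I. c i \<otimes> v i k) = \<zero>"
    proof (intro allI impI)
      fix k assume k: "k < Suc m"
      show "(\<Oplus>i\<in>I. c i \<otimes> v i k) = \<zero>"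
      proof (cases "k < m")
        case True then show ?thesis using c by auto
      next
        case False
        then have "k = m" using k by simp
        then have "(\<Oplus>i\<in>I. c i \<otimes> v i k) = (\<Oplus>i\<in>I. \<zero>)"
          using True c by (intro finsum_cong) auto
        then show ?thesis by simp
      qed
    qed
    then show ?thesis using c by blast
  next
    case False
    then obtain j where j: "j \<in> I" "v j m \<noteq> \<zero>" by auto
    have vjm: "v j m \<in> Units R" using j Suc.prems field_Units by auto
    define t where "t i = v i m \<otimes> inv (v j m)" for i
    define u where "u i k = v i k \<ominus> t i \<otimes> v j k" for i k
    have vc: "\<And>i k. i \<in> I \<Longrightarrow> k < Suc m \<Longrightarrow> v i k \<in> carrier R" using Suc.prems by auto
    have tc: "\<And>i. i \<in> I \<Longrightarrow> t i \<in> carrier R" unfolding t_def using vc vjm by auto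
    have uc: "\<forall>i\<in>I-{j}. \<forall>k<m. u i k \<in> carrier R" unfolding u_def using vc tc j by auto
    have card: "m < card (I - {j})" using Suc.prems j by (simp add: card_Diff_singleton)
    obtain c' where c': "\<forall>i\<in>I-{j}. c' i \<in> carrier R" "\<exists>i\<in>I-{j}. c' i \<noteq> \<zero>"
      "\<forall>k<m. (\<Oplus>i\<in>I-{j}. c' i \<otimes> u i k) = \<zero>"
      using Suc.hyps[OF _ card uc] Suc.prems(1) by blast
    define S where "S = (\<Oplus>i\<in>I-{j}. c' i \<otimes> t i)"
    have Sc: "S \<in> carrier R" unfolding S_def using c' tc by (auto intro!: finsum_closed)
    define c where "c i = (if i = j then \<ominus> S else c' i)" for i
    have cc: "\<forall>i\<in>I. c i \<in> carrier R" using c' Sc by (auto simp: c_def)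
    show ?thesis
    proof (intro exI[of _ c] conjI cc)
      show "\<exists>i\<in>I. c i \<noteq> \<zero>" using c'(2) by (auto simp: c_def)
      show "\<forall>k<Suc m. (\<Oplus>i\<in>I. c i \<otimes> v i k) = \<zero>"
      proof (intro allI impI)
        fix k assume k: "k < Suc m"
        have vjk: "v j k \<in> carrier R" using vc j k by auto
        have u0: "(\<Oplus>i\<in>I-{j}. c' i \<otimes> u i k) = \<zero>"
        proof (cases "k < m")
          case True then show ?thesis using c' by auto
        next
          case False
          then have km: "k = m" using k by simp
          have "\<And>i. i \<in> I \<Longrightarrow> t i \<otimes> v j m = v i m"
            unfolding t_def using vc vjm by (simp add: m_assoc Units_l_inv Units_inv_closed Units_closed)
          then have "\<And>i. i \<in> I \<Longrightarrow> u i m = \<zero>"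
            unfolding u_def using vc by (simp add: r_neg minus_eq)
          then have "(\<Oplus>i\<in>I-{j}. c' i \<otimes> u i k) = (\<Oplus>i\<in>I-{j}. \<zero>)"
            using km c' by (intro finsum_cong) auto
          then show ?thesis by simp
        qed
        have split: "(\<Oplus>i\<in>I. c i \<otimes> v i k) = c j \<otimes> v j k \<oplus> (\<Oplus>i\<in>I-{j}. c i \<otimes> v i k)"
        proof -
          have "I = insert j (I - {j})" using j by auto
          then have "(\<Oplus>i\<in>I. c i \<otimes> v i k) = (\<Oplus>i\<in>insert j (I - {j}). c i \<otimes> v i k)" by simp
          also have "\<dots> = c j \<otimes> v j k \<oplus> (\<Oplus>i\<in>I-{j}. c i \<otimes> v i k)"
            using Suc.prems(1) cc vc k j by (intro finsum_insert) auto
          finally show ?thesis .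
        qed
        have eqi: "c i \<otimes> v i k = c' i \<otimes> u i k \<oplus> (c' i \<otimes> t i) \<otimes> v j k" if i: "i \<in> I - {j}" for i
        proof -
          have ci: "c' i \<in> carrier R" "t i \<in> carrier R" "v i k \<in> carrier R" using i c' tc vc k by auto
          show ?thesis
            unfolding u_def c_def using i ci vjk by simp algebra
        qed
        have "(\<Oplus>i\<in>I-{j}. c i \<otimes> v i k) = (\<Oplus>i\<in>I-{j}. c' i \<otimes> u i k \<oplus> (c' i \<otimes> t i) \<otimes> v j k)"
          using eqi c' tc vc k j vjk by (intro finsum_cong) (auto simp: u_def)
        also have "\<dots> = (\<Oplus>i\<in>I-{j}. c' i \<otimes> u i k) \<oplus> (\<Oplus>i\<in>I-{j}. (c' i \<otimes> t i) \<otimes> v j k)"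
          using c' tc vc k j vjk by (intro finsum_addf) (auto simp: u_def)
        also have "\<dots> = S \<otimes> v j k"
          unfolding u0 S_def using c' tc vjk Suc.prems(1) by (simp add: finsum_ldistr finsum_closed)
        finally show "(\<Oplus>i\<in>I. c i \<otimes> v i k) = \<zero>"
          unfolding split using Sc vjk by (simp add: c_def) algebra
      qed
    qed
  qed
qed

end

fun happ :: "('a,'b) ring_scheme \<Rightarrow> nat \<Rightarrow> (nat \<times> nat \<Rightarrow> 'a) \<Rightarrow> 'a list \<Rightarrow> (nat \<Rightarrow> 'a) \<Rightarrow> (nat \<Rightarrow> 'a)" where
  "happ R n T [] v = vec_zero R n"
| "happ R n T (a # q) v = vec_add R n (vec_smult R n a v) (mat_vec R n T (happ R n T q v))"

fun hev :: "('a,'b) ring_scheme \<Rightarrow> 'a list \<Rightarrow> 'a \<Rightarrow> 'a" where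
  "hev R [] x = \<zero>\<^bsub>R\<^esub>"
| "hev R (a # q) x = a \<oplus>\<^bsub>R\<^esub> x \<otimes>\<^bsub>R\<^esub> hev R q x"

fun sdiv :: "('a,'b) ring_scheme \<Rightarrow> 'a \<Rightarrow> 'a list \<Rightarrow> 'a list" where
  "sdiv R x [] = []"
| "sdiv R x [a] = []"
| "sdiv R x (a # b # q) = hev R (b # q) x # sdiv R x (b # q)"

definition alg_closed_sum :: "('a,'b) ring_scheme \<Rightarrow> bool" where
  "alg_closed_sum K \<longleftrightarrow> (\<forall>m::nat. m \<ge> 1 \<longrightarrow> (\<forall>c \<in> {..<m} \<rightarrow> carrier K. \<exists>x\<in>carrier K.
      x [^]\<^bsub>K\<^esub> m \<oplus>\<^bsub>K\<^esub> (\<Oplus>\<^bsub>K\<^esub> i\<in>{..<m}. c i \<otimes>\<^bsub>K\<^esub> x [^]\<^bsub>K\<^esub> i) = \<zero>\<^bsub>K\<^esub>))"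

context cring
begin

lemma hev_closed: "x \<in> carrier R \<Longrightarrow> set p \<subseteq> carrier R \<Longrightarrow> hev R p x \<in> carrier R"
  by (induct p) auto

lemma happ_closed: "T \<in> mat_carrier R n \<Longrightarrow> v \<in> vec_carrier R n \<Longrightarrow> set p \<subseteq> carrier R \<Longrightarrow> happ R n T p v \<in> vec_carrier R n"
  by (induct p) (auto intro!: vec_add_closed vec_smult_closed mat_vec_closed vec_zero_closed)

lemma sdiv_props:
  assumes "x \<in> carrier R" "set p \<subseteq> carrier R"
  shows "set (sdiv R x p) \<subseteq> carrier R \<and> length (sdiv R x p) = length p - 1 \<and>
         (length p \<ge> 2 \<longrightarrow> last (sdiv R x p) = last p)"
  using assms
proof (induct p)
  case (Cons a p)
  show ?case
  proof (cases p)
    case Nil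
    then show ?thesis by simp
  next
    case (Cons b q)
    have IH: "set (sdiv R x p) \<subseteq> carrier R \<and> length (sdiv R x p) = length p - 1 \<and>
         (length p \<ge> 2 \<longrightarrow> last (sdiv R x p) = last p)" using Cons.hyps Cons.prems by auto
    have h: "hev R (b # q) x \<in> carrier R" using Cons.prems \<open>p = b # q\<close> by (intro hev_closed) auto
    show ?thesis
    proof (cases q)
      case Nil
      then show ?thesis using \<open>p = b # q\<close> Cons.prems by simp
    next
      case (Cons c q')
      then show ?thesis using IH h \<open>p = b # q\<close> by auto
    qed
  qed
qed simp

lemmas vclos = vec_add_closed vec_smult_closed mat_vec_closed vec_zero_closed

lemma happ_identity:
  assumes T: "T \<in> mat_carrier R n" and v: "v \<in> vec_carrier R n" and x: "x \<in> carrier R"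
  shows "set p \<subseteq> carrier R \<Longrightarrow> p \<noteq> [] \<Longrightarrow> happ R n T p v =
     vec_add R n (vec_add R n (mat_vec R n T (happ R n T (sdiv R x p) v))
        (vec_smult R n (\<ominus> x) (happ R n T (sdiv R x p) v))) (vec_smult R n (hev R p x) v)"
proof (induct p)
  case Nil then show ?case by simp
next
  case (Cons a p)
  have a: "a \<in> carrier R" using Cons.prems by simp
  show ?case
  proof (cases p)
    case Nil
    show ?thesis
    proof (rule vec_eqI[of _ R n])
      fix i assume i: "i < n"
      have vi: "v i \<in> carrier R" using vec_carrierD[OF v i] .
      show "happ R n T (a # p) v i = vec_add R n (vec_add R n (mat_vec R n T (happ R n T (sdiv R x (a # p)) v))
        (vec_smult R n (\<ominus> x) (happ R n T (sdiv R x (a # p)) v))) (vec_smult R n (hev R (a # p) x) v) i"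
        using Nil i vi a x T by (simp add: entries mat_vec_zero)
    qed (use Nil a x T v in \<open>auto intro!: vclos simp: mat_vec_zero\<close>)
  next
    case (Cons b q)
    have pc: "set (b#q) \<subseteq> carrier R" using Cons.prems \<open>p = b # q\<close> by auto
    define h where "h = hev R (b#q) x"
    define w' where "w' = happ R n T (sdiv R x (b#q)) v"
    have hc: "h \<in> carrier R" unfolding h_def using x pc by (rule hev_closed)
    have w'c: "w' \<in> vec_carrier R n" unfolding w'_def
      using T v sdiv_props[OF x pc] by (intro happ_closed) auto
    have IH: "happ R n T (b#q) v = vec_add R n (vec_add R n (mat_vec R n T w') (vec_smult R n (\<ominus> x) w')) (vec_smult R n h v)"
      using Cons.hyps Cons.prems \<open>p = b # q\<close> unfolding h_def w'_def by auto
    have lhs: "happ R n T (a # p) v = vec_add R n (vec_smult R n a v) (mat_vec R n T (happ R n T (b#q) v))"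
      by (simp add: Cons)
    have w: "happ R n T (sdiv R x (a # p)) v = vec_add R n (vec_smult R n h v) (mat_vec R n T w')"
      by (simp add: Cons h_def w'_def)
    have hv: "hev R (a#p) x = a \<oplus> x \<otimes> h" by (simp add: Cons h_def)
    define Tw' where "Tw' = mat_vec R n T w'"
    define TTw' where "TTw' = mat_vec R n T Tw'"
    define Tv where "Tv = mat_vec R n T v"
    have c1: "Tw' \<in> vec_carrier R n" "TTw' \<in> vec_carrier R n" "Tv \<in> vec_carrier R n"
      unfolding Tw'_def TTw'_def Tv_def using T v w'c by (auto intro!: mat_vec_closed)
    have e1: "mat_vec R n T (vec_add R n (vec_add R n Tw' (vec_smult R n (\<ominus> x) w')) (vec_smult R n h v))
       = vec_add R n (vec_add R n TTw' (vec_smult R n (\<ominus> x) Tw')) (vec_smult R n h Tv)"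
      using T v w'c c1 x hc unfolding TTw'_def Tw'_def Tv_def
      by (simp add: mat_vec_add mat_vec_smult vclos)
    have e2: "mat_vec R n T (vec_add R n (vec_smult R n h v) Tw') = vec_add R n (vec_smult R n h Tv) TTw'"
      using T v w'c c1 x hc unfolding TTw'_def Tw'_def Tv_def
      by (simp add: mat_vec_add mat_vec_smult vclos)
    have "happ R n T (a # p) v = vec_add R n (vec_smult R n a v) (vec_add R n (vec_add R n TTw' (vec_smult R n (\<ominus> x) Tw')) (vec_smult R n h Tv))"
      unfolding lhs IH using e1 by (simp add: Tw'_def)
    also have "\<dots> = vec_add R n (vec_add R n (vec_add R n (vec_smult R n h Tv) TTw')
        (vec_smult R n (\<ominus> x) (vec_add R n (vec_smult R n h v) Tw'))) (vec_smult R n (a \<oplus> x \<otimes> h) v)"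
    proof (rule vec_eqI[of _ R n])
      fix i assume i: "i < n"
      have ci: "v i \<in> carrier R" "Tw' i \<in> carrier R" "TTw' i \<in> carrier R" "Tv i \<in> carrier R" "w' i \<in> carrier R"
        using i v c1 w'c by (auto intro: vec_carrierD)
      show "vec_add R n (vec_smult R n a v) (vec_add R n (vec_add R n TTw' (vec_smult R n (\<ominus> x) Tw')) (vec_smult R n h Tv)) i =
        vec_add R n (vec_add R n (vec_add R n (vec_smult R n h Tv) TTw')
        (vec_smult R n (\<ominus> x) (vec_add R n (vec_smult R n h v) Tw'))) (vec_smult R n (a \<oplus> x \<otimes> h) v) i"
        using i ci a x hc by (simp add: entries) algebra
    qed (use a x hc v c1 w'c in \<open>auto intro!: vclos\<close>)
    also have "\<dots> = vec_add R n (vec_add R n (mat_vec R n T (happ R n T (sdiv R x (a # p)) v))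
        (vec_smult R n (\<ominus> x) (happ R n T (sdiv R x (a # p)) v))) (vec_smult R n (hev R (a # p) x) v)"
      unfolding w hv Tw'_def[symmetric] e2 by (rule refl)
    finally show ?thesis .
  qed
qed

lemma finsum_shift0:
  assumes "f \<in> {..<Suc L} \<rightarrow> carrier R"
  shows "(\<Oplus>i\<in>{..<Suc L}. f i) = f 0 \<oplus> (\<Oplus>i\<in>{..<L}. f (Suc i))"
proof (cases L)
  case 0
  then show ?thesis using assms by (simp add: lessThan_Suc)
next
  case (Suc L')
  have "(\<Oplus>i\<in>{..<Suc L}. f i) = (\<Oplus>i\<in>{..Suc L'}. f i)" using Suc by (simp add: lessThan_Suc_atMost)
  also have "\<dots> = (\<Oplus>i\<in>{..L'}. f (Suc i)) \<oplus> f 0"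
    using assms Suc by (intro finsum_Suc2) (auto simp: lessThan_Suc_atMost)
  also have "\<dots> = f 0 \<oplus> (\<Oplus>i\<in>{..<L}. f (Suc i))"
    using assms Suc by (subst a_comm) (auto intro!: finsum_closed simp: lessThan_Suc_atMost)
  finally show ?thesis .
qed

lemma hev_sum:
  assumes x: "x \<in> carrier R"
  shows "set p \<subseteq> carrier R \<Longrightarrow> hev R p x = (\<Oplus>i\<in>{..<length p}. p ! i \<otimes> x [^] i)"
proof (induct p)
  case Nil then show ?case by simp
next
  case (Cons a q)
  have a: "a \<in> carrier R" and q: "set q \<subseteq> carrier R" using Cons.prems by auto
  have qi: "\<And>i. i < length q \<Longrightarrow> q ! i \<in> carrier R" using q nth_mem by blast
  have "hev R (a # q) x = a \<oplus> x \<otimes> (\<Oplus>i\<in>{..<length q}. q ! i \<otimes> x [^] i)" using Cons q by simp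
  also have "\<dots> = a \<oplus> (\<Oplus>i\<in>{..<length q}. q ! i \<otimes> x [^] Suc i)"
  proof -
    have "x \<otimes> (\<Oplus>i\<in>{..<length q}. q ! i \<otimes> x [^] i) = (\<Oplus>i\<in>{..<length q}. x \<otimes> (q ! i \<otimes> x [^] i))"
      using x qi by (intro finsum_rdistr) auto
    also have "\<dots> = (\<Oplus>i\<in>{..<length q}. q ! i \<otimes> x [^] Suc i)"
      using x qi by (intro finsum_cong) (auto simp: m_ac)
    finally show ?thesis by simp
  qed
  also have "\<dots> = (\<Oplus>i\<in>{..<Suc (length q)}. (a # q) ! i \<otimes> x [^] i)"
  proof -
    have "\<And>i. i < Suc (length q) \<Longrightarrow> (a#q)!i \<in> carrier R" using a qi by (case_tac i) auto
    then show ?thesis using x a by (subst finsum_shift0) auto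
  qed
  finally show ?case by simp
qed

end

context field
begin

lemma root_exists:
  assumes AC: "alg_closed_sum R" and p: "set p \<subseteq> carrier R" and len: "length p \<ge> 2" and lst: "last p \<noteq> \<zero>"
  shows "\<exists>x\<in>carrier R. hev R p x = \<zero>"
proof -
  define L where "L = length p - 1"
  have L1: "L \<ge> 1" and lenL: "length p = Suc L" using len unfolding L_def by auto
  have pi: "\<And>i. i < length p \<Longrightarrow> p ! i \<in> carrier R" using p nth_mem by blast
  define a where "a = p ! L"
  have aL: "a = last p" unfolding a_def L_def using len by (subst last_conv_nth) auto
  have ac: "a \<in> carrier R" unfolding a_def using pi lenL by simp
  have au: "a \<in> Units R" using ac lst aL field_Units by auto
  define c where "c i = inv a \<otimes> p ! i" for i
  have cc: "c \<in> {..<L} \<rightarrow> carrier R" unfolding c_def using au pi lenL by auto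
  obtain x where x: "x \<in> carrier R" and r: "x [^] L \<oplus> (\<Oplus>i\<in>{..<L}. c i \<otimes> x [^] i) = \<zero>"
    using AC L1 cc unfolding alg_closed_sum_def by blast
  have "hev R p x = (\<Oplus>i\<in>{..L}. p ! i \<otimes> x [^] i)" using hev_sum[OF x p] lenL by (simp add: lessThan_Suc_atMost)
  also have "\<dots> = p ! L \<otimes> x [^] L \<oplus> (\<Oplus>i\<in>{..<L}. p ! i \<otimes> x [^] i)"
    using pi lenL x by (intro add.finprod_Suc3) auto
  also have "\<dots> = a \<otimes> (x [^] L \<oplus> (\<Oplus>i\<in>{..<L}. c i \<otimes> x [^] i))"
  proof -
    have "a \<otimes> (\<Oplus>i\<in>{..<L}. c i \<otimes> x [^] i) = (\<Oplus>i\<in>{..<L}. a \<otimes> (c i \<otimes> x [^] i))"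
      using cc x ac by (intro finsum_rdistr) auto
    also have "\<dots> = (\<Oplus>i\<in>{..<L}. p ! i \<otimes> x [^] i)"
    proof -
      have "a \<otimes> (c i \<otimes> x [^] i) = p ! i \<otimes> x [^] i" if "i \<in> {..<L}" for i
      proof -
        have "p ! i \<in> carrier R" using that pi lenL by auto
        then show ?thesis
          unfolding c_def using au x by (simp add: m_assoc[symmetric] Units_r_inv Units_inv_closed Units_closed)
      qed
      then show ?thesis using pi lenL x by (intro finsum_cong) auto
    qed
    moreover have "(\<Oplus>i\<in>{..<L}. c i \<otimes> x [^] i) \<in> carrier R" using cc x by (intro finsum_closed) auto
    ultimately show ?thesis using ac x by (simp add: r_distr a_def)
  qed
  also have "\<dots> = \<zero>" using r ac by simp
  finally show ?thesis using x by blast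
qed

end

context cring
begin

lemma pw_closed: "T \<in> mat_carrier R n \<Longrightarrow> x \<in> vec_carrier R n \<Longrightarrow> (mat_vec R n T ^^ k) x \<in> vec_carrier R n"
  by (induct k) (auto intro: mat_vec_closed)

lemma pw_smult: "T \<in> mat_carrier R n \<Longrightarrow> x \<in> vec_carrier R n \<Longrightarrow> a \<in> carrier R \<Longrightarrow>
   (mat_vec R n T ^^ k) (vec_smult R n a x) = vec_smult R n a ((mat_vec R n T ^^ k) x)"
  by (induct k) (auto simp: mat_vec_smult pw_closed)

lemma happ_single: "v \<in> vec_carrier R n \<Longrightarrow> T \<in> mat_carrier R n \<Longrightarrow> a \<in> carrier R \<Longrightarrow> happ R n T [a] v = vec_smult R n a v"
  by (rule vec_eqI[of _ R n]) (auto simp: entries mat_vec_zero intro!: vclos dest: vec_carrierD)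

lemma happ_append:
  assumes T: "T \<in> mat_carrier R n" and v: "v \<in> vec_carrier R n" and q: "set q \<subseteq> carrier R"
  shows "set p \<subseteq> carrier R \<Longrightarrow> happ R n T (p @ q) v = vec_add R n (happ R n T p v) ((mat_vec R n T ^^ length p) (happ R n T q v))"
proof (induct p)
  case Nil
  have hq: "happ R n T q v \<in> vec_carrier R n" using T v q by (rule happ_closed)
  show ?case
    by (rule vec_eqI[of _ R n]) (use hq in \<open>auto simp: entries intro!: vclos dest: vec_carrierD\<close>)
next
  case (Cons a p)
  have a: "a \<in> carrier R" and pc: "set p \<subseteq> carrier R" using Cons.prems by auto
  have hq: "happ R n T q v \<in> vec_carrier R n" using T v q by (rule happ_closed)
  have hp: "happ R n T p v \<in> vec_carrier R n" using T v pc by (rule happ_closed)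
  define y where "y = (mat_vec R n T ^^ length p) (happ R n T q v)"
  have yc: "y \<in> vec_carrier R n" unfolding y_def using T hq by (rule pw_closed)
  have "happ R n T ((a # p) @ q) v = vec_add R n (vec_smult R n a v) (vec_add R n (mat_vec R n T (happ R n T p v)) (mat_vec R n T y))"
    using Cons pc T hp yc by (simp add: mat_vec_add y_def)
  also have "\<dots> = vec_add R n (vec_add R n (vec_smult R n a v) (mat_vec R n T (happ R n T p v))) (mat_vec R n T y)"
  proof (rule vec_eqI[of _ R n])
    fix i assume i: "i < n"
    have "v i \<in> carrier R" "mat_vec R n T (happ R n T p v) i \<in> carrier R" "mat_vec R n T y i \<in> carrier R"
      using i v T hp yc by (auto intro!: vec_carrierD[of _ R n] mat_vec_closed)
    then show "vec_add R n (vec_smult R n a v) (vec_add R n (mat_vec R n T (happ R n T p v)) (mat_vec R n T y)) i =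
      vec_add R n (vec_add R n (vec_smult R n a v) (mat_vec R n T (happ R n T p v))) (mat_vec R n T y) i"
      using i a by (simp add: entries a_assoc)
  qed (use a v T hp yc in \<open>auto intro!: vclos\<close>)
  also have "\<dots> = vec_add R n (happ R n T (a # p) v) ((mat_vec R n T ^^ length (a # p)) (happ R n T q v))"
    by (simp add: y_def)
  finally show ?case .
qed

lemma happ_map:
  assumes T: "T \<in> mat_carrier R n" and v: "v \<in> vec_carrier R n"
  shows "(\<forall>i<L. c i \<in> carrier R) \<Longrightarrow> happ R n T (map c [0..<L]) v =
     (\<lambda>k\<in>{..<n}. \<Oplus>i\<in>{..<L}. c i \<otimes> (mat_vec R n T ^^ i) v k)"
proof (induct L)
  case 0
  then show ?case by (simp add: vec_zero_def)
next
  case (Suc L)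
  have cL: "c L \<in> carrier R" using Suc.prems by simp
  have pc: "set (map c [0..<L]) \<subseteq> carrier R" using Suc.prems by auto
  have pwc: "\<And>i k. k < n \<Longrightarrow> (mat_vec R n T ^^ i) v k \<in> carrier R"
    using pw_closed[OF T v] vec_carrierD by blast
  have "happ R n T (map c [0..<Suc L]) v = happ R n T (map c [0..<L] @ [c L]) v" by simp
  also have "\<dots> = vec_add R n (happ R n T (map c [0..<L]) v) ((mat_vec R n T ^^ L) (vec_smult R n (c L) v))"
    using happ_append[OF T v _ pc] cL happ_single[OF v T cL] by simp
  also have "\<dots> = vec_add R n (\<lambda>k\<in>{..<n}. \<Oplus>i\<in>{..<L}. c i \<otimes> (mat_vec R n T ^^ i) v k)
      (vec_smult R n (c L) ((mat_vec R n T ^^ L) v))"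
  proof -
    have IH: "happ R n T (map c [0..<L]) v = (\<lambda>k\<in>{..<n}. \<Oplus>i\<in>{..<L}. c i \<otimes> (mat_vec R n T ^^ i) v k)"
      using Suc.prems by (intro Suc.hyps) auto
    show ?thesis unfolding IH pw_smult[OF T v cL] ..
  qed
  also have "\<dots> = (\<lambda>k\<in>{..<n}. \<Oplus>i\<in>{..<Suc L}. c i \<otimes> (mat_vec R n T ^^ i) v k)"
  proof (rule ext)
    fix k
    show "vec_add R n (\<lambda>k\<in>{..<n}. \<Oplus>i\<in>{..<L}. c i \<otimes> (mat_vec R n T ^^ i) v k)
      (vec_smult R n (c L) ((mat_vec R n T ^^ L) v)) k = (\<lambda>k\<in>{..<n}. \<Oplus>i\<in>{..<Suc L}. c i \<otimes> (mat_vec R n T ^^ i) v k) k"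
    proof (cases "k < n")
      case True
      have "(\<Oplus>i\<in>{..<Suc L}. c i \<otimes> (mat_vec R n T ^^ i) v k) = c L \<otimes> (mat_vec R n T ^^ L) v k \<oplus> (\<Oplus>i\<in>{..<L}. c i \<otimes> (mat_vec R n T ^^ i) v k)"
        unfolding lessThan_Suc using True Suc.prems pwc by (intro finsum_insert) auto
      then show ?thesis using True Suc.prems pwc cL
        by (simp add: vec_add_def vec_smult_def a_comm finsum_closed)
    next
      case False
      then show ?thesis by (simp add: vec_add_def)
    qed
  qed
  finally show ?case .
qed

end

context field
begin

lemma eigen_aux:
  assumes AC: "alg_closed_sum R" and T: "T \<in> mat_carrier R n" and v: "v \<in> vec_carrier R n"
    and v0: "v \<noteq> vec_zero R n"
  shows "set p \<subseteq> carrier R \<Longrightarrow> p \<noteq> [] \<Longrightarrow> last p \<noteq> \<zero> \<Longrightarrow> happ R n T p v = vec_zero R n \<Longrightarrow>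
    \<exists>\<mu>\<in>carrier R. \<exists>w\<in>vec_carrier R n. w \<noteq> vec_zero R n \<and> mat_vec R n T w = vec_smult R n \<mu> w"
proof (induct "length p" arbitrary: p rule: less_induct)
  case less
  show ?case
  proof (cases "length p \<ge> 2")
    case False
    obtain a q where p: "p = a # q" using less.prems(2) by (cases p) auto
    have q: "q = []" using False p by (cases q) auto
    have a: "a \<in> carrier R" "a \<noteq> \<zero>" using less.prems p q by auto
    have "vec_smult R n a v = vec_zero R n" using happ_single[OF v T a(1)] less.prems p q by simp
    then have "\<And>k. k < n \<Longrightarrow> a \<otimes> v k = \<zero>" by (metis vec_smult_entry vec_zero_entry)
    then have "\<And>k. k < n \<Longrightarrow> v k = \<zero>" using a v vec_carrierD integral by blast
    then have "v = vec_zero R n" using v by (intro vec_eqI[OF v vec_zero_closed]) (simp add: vec_zero_entry)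
    then show ?thesis using v0 by simp
  next
    case True
    obtain x where x: "x \<in> carrier R" "hev R p x = \<zero>" using root_exists[OF AC less.prems(1) True less.prems(3)] by blast
    define q where "q = sdiv R x p"
    have qp: "set q \<subseteq> carrier R" "length q = length p - 1" "last q = last p"
      using sdiv_props[OF x(1) less.prems(1)] True unfolding q_def by auto
    have qne: "q \<noteq> []" using qp True by auto
    define w where "w = happ R n T q v"
    have wc: "w \<in> vec_carrier R n" unfolding w_def using T v qp by (intro happ_closed) auto
    have idt: "vec_add R n (vec_add R n (mat_vec R n T w) (vec_smult R n (\<ominus> x) w)) (vec_smult R n \<zero> v) = vec_zero R n"
      using happ_identity[OF T v x(1) less.prems(1,2)] less.prems(4) x(2) unfolding w_def q_def by simp
    have Tw: "mat_vec R n T w = vec_smult R n x w"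
    proof (rule vec_eqI[OF mat_vec_closed[OF T wc] vec_smult_closed[OF x(1) wc]])
      fix k assume k: "k < n"
      have e: "(mat_vec R n T w k \<oplus> \<ominus> x \<otimes> w k) \<oplus> \<zero> \<otimes> v k = \<zero>"
        using fun_cong[OF idt, of k] k by (simp add: entries)
      have c: "mat_vec R n T w k \<in> carrier R" "w k \<in> carrier R" "v k \<in> carrier R"
        using k T wc v by (auto intro!: vec_carrierD[of _ R n] mat_vec_closed)
      have "mat_vec R n T w k = x \<otimes> w k \<oplus> ((mat_vec R n T w k \<oplus> \<ominus> x \<otimes> w k) \<oplus> \<zero> \<otimes> v k)"
        using c x(1) by algebra
      then have "mat_vec R n T w k = x \<otimes> w k" using e c x(1) by simp
      then show "mat_vec R n T w k = vec_smult R n x w k" using k by (simp add: entries)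
    qed
    show ?thesis
    proof (cases "w = vec_zero R n")
      case True
      have "length q < length p" using qp True \<open>2 \<le> length p\<close> by simp
      then show ?thesis using less.hyps[of q] qp qne less.prems(3) True w_def by simp
    next
      case False
      then show ?thesis using x(1) wc Tw by blast
    qed
  qed
qed

lemma eigen_exists:
  assumes AC: "alg_closed_sum R" and T: "T \<in> mat_carrier R n" and n: "n > 0"
  shows "\<exists>\<mu>\<in>carrier R. \<exists>w\<in>vec_carrier R n. w \<noteq> vec_zero R n \<and> mat_vec R n T w = vec_smult R n \<mu> w"
proof -
  define v where "v = unitv n 0"
  have v: "v \<in> vec_carrier R n" unfolding v_def by (rule unitv_closed)
  have v0: "v \<noteq> vec_zero R n"
  proof
    assume "v = vec_zero R n"
    then have "v 0 = vec_zero R n 0" by simp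
    then show False using n by (simp add: v_def unitv_def vec_zero_def)
  qed
  define pw where "pw i = (mat_vec R n T ^^ i) v" for i
  have pwc: "\<And>i k. k < n \<Longrightarrow> pw i k \<in> carrier R"
    unfolding pw_def using pw_closed[OF T v] vec_carrierD by blast
  obtain c where c: "\<forall>i\<in>{..n}. c i \<in> carrier R" "\<exists>i\<in>{..n}. c i \<noteq> \<zero>"
     "\<forall>k<n. (\<Oplus>i\<in>{..n}. c i \<otimes> pw i k) = \<zero>"
    using dependent[of "{..n}" n pw] pwc by auto
  define S where "S = {i\<in>{..n}. c i \<noteq> \<zero>}"
  have Sf: "finite S" "S \<noteq> {}" using c(2) unfolding S_def by auto
  define i0 where "i0 = Max S"
  have i0: "i0 \<in> S" unfolding i0_def using Sf by (rule Max_in)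
  have big: "c i = \<zero>" if "i \<in> {..n}" "i > i0" for i
  proof (rule ccontr)
    assume "c i \<noteq> \<zero>"
    then have "i \<in> S" using that unfolding S_def by auto
    then have "i \<le> i0" unfolding i0_def using Max_ge[OF Sf(1)] by auto
    then show False using that by simp
  qed
  define p where "p = map c [0..<Suc i0]"
  have cc: "\<forall>i<Suc i0. c i \<in> carrier R" using c(1) i0 unfolding S_def by auto
  have pc: "set p \<subseteq> carrier R" unfolding p_def using cc by auto
  have plast: "last p \<noteq> \<zero>" unfolding p_def using i0 unfolding S_def by simp
  have pne: "p \<noteq> []" unfolding p_def by simp
  have hp: "happ R n T p v = (\<lambda>k\<in>{..<n}. \<Oplus>i\<in>{..<Suc i0}. c i \<otimes> pw i k)"
    unfolding p_def pw_def using happ_map[OF T v cc] by simp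
  have "happ R n T p v = vec_zero R n"
    unfolding hp vec_zero_def
  proof (rule restrict_ext)
    fix k assume k: "k \<in> {..<n}"
    have "(\<Oplus>i\<in>{..<Suc i0}. c i \<otimes> pw i k) = (\<Oplus>i\<in>{..n}. c i \<otimes> pw i k)"
    proof (rule add.finprod_mono_neutral_cong_left)
      show "{..<Suc i0} \<subseteq> {..n}" using i0 unfolding S_def by auto
      show "\<And>i. i \<in> {..n} - {..<Suc i0} \<Longrightarrow> c i \<otimes> pw i k = \<zero>" using big pwc k by auto
      show "(\<lambda>i. c i \<otimes> pw i k) \<in> {..n} \<rightarrow> carrier R" using c(1) pwc k by auto
    qed auto
    then show "(\<Oplus>i\<in>{..<Suc i0}. c i \<otimes> pw i k) = \<zero>" using c(3) k by simp
  qed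
  then show ?thesis using eigen_aux[OF AC T v v0 pc pne plast] by blast
qed

end

lemma schur:
  fixes K :: "'k ring"
  assumes F: "field K" and AC: "alg_closed_sum K"
    and irr: "irreducible_rep K n H \<rho>" and rc: "\<forall>h\<in>H. \<rho> h \<in> mat_carrier K n"
    and T: "T \<in> mat_carrier K n" and comm: "\<forall>h\<in>H. mat_mul K n T (\<rho> h) = mat_mul K n (\<rho> h) T"
  shows "\<exists>\<mu>\<in>carrier K. \<forall>i<n. \<forall>j<n. T (i,j) = (if i = j then \<mu> else \<zero>\<^bsub>K\<^esub>)"
proof -
  interpret field K by (rule F)
  have n: "n > 0" using irr unfolding irreducible_rep_def by simp
  obtain \<mu> w where lw: "\<mu> \<in> carrier K" "w \<in> vec_carrier K n" "w \<noteq> vec_zero K n" "mat_vec K n T w = vec_smult K n \<mu> w"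
    using eigen_exists[OF AC T n] by blast
  define S where "S = {u \<in> vec_carrier K n. mat_vec K n T u = vec_smult K n \<mu> u}"
  have S0: "vec_zero K n \<in> S" unfolding S_def
    using T lw(1) by (auto simp: mat_vec_zero vec_zero_closed intro!: vec_eqI[of _ K n] vec_smult_closed simp: entries)
  have Sadd: "\<forall>u\<in>S. \<forall>u'\<in>S. vec_add K n u u' \<in> S"
  proof (intro ballI)
    fix u u' assume u: "u \<in> S" and u': "u' \<in> S"
    then have uc: "u \<in> vec_carrier K n" "u' \<in> vec_carrier K n" and e: "mat_vec K n T u = vec_smult K n \<mu> u"
      "mat_vec K n T u' = vec_smult K n \<mu> u'" unfolding S_def by auto
    have "mat_vec K n T (vec_add K n u u') = vec_smult K n \<mu> (vec_add K n u u')"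
      unfolding mat_vec_add[OF T uc] e
    proof (rule vec_eqI[of _ K n])
      fix i assume i: "i < n"
      have "u i \<in> carrier K" "u' i \<in> carrier K" using uc i by (auto intro: vec_carrierD)
      then show "vec_add K n (vec_smult K n \<mu> u) (vec_smult K n \<mu> u') i = vec_smult K n \<mu> (vec_add K n u u') i"
        using i lw(1) by (simp add: entries r_distr)
    qed (use uc lw(1) in \<open>auto intro!: vclos\<close>)
    then show "vec_add K n u u' \<in> S" unfolding S_def using uc by (auto intro: vec_add_closed)
  qed
  have Ssm: "\<forall>c\<in>carrier K. \<forall>u\<in>S. vec_smult K n c u \<in> S"
  proof (intro ballI)
    fix c u assume c: "c \<in> carrier K" and u: "u \<in> S"
    then have uc: "u \<in> vec_carrier K n" and e: "mat_vec K n T u = vec_smult K n \<mu> u" unfolding S_def by auto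
    have "mat_vec K n T (vec_smult K n c u) = vec_smult K n \<mu> (vec_smult K n c u)"
      unfolding mat_vec_smult[OF T c uc] e
    proof (rule vec_eqI[of _ K n])
      fix i assume i: "i < n"
      have "u i \<in> carrier K" using uc i by (auto intro: vec_carrierD)
      then show "vec_smult K n c (vec_smult K n \<mu> u) i = vec_smult K n \<mu> (vec_smult K n c u) i"
        using i lw(1) c by (simp add: entries m_lcomm)
    qed (use uc lw(1) c in \<open>auto intro!: vclos\<close>)
    then show "vec_smult K n c u \<in> S" unfolding S_def using uc c by (auto intro: vec_smult_closed)
  qed
  have Sinv: "\<forall>g\<in>H. \<forall>u\<in>S. mat_vec K n (\<rho> g) u \<in> S"
  proof (intro ballI)
    fix g u assume g: "g \<in> H" and u: "u \<in> S"
    then have uc: "u \<in> vec_carrier K n" and e: "mat_vec K n T u = vec_smult K n \<mu> u" unfolding S_def by auto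
    have rg: "\<rho> g \<in> mat_carrier K n" using rc g by auto
    have "mat_vec K n T (mat_vec K n (\<rho> g) u) = mat_vec K n (mat_mul K n T (\<rho> g)) u"
      using mat_vec_mul[OF T rg uc] by simp
    also have "\<dots> = mat_vec K n (\<rho> g) (mat_vec K n T u)" using comm g mat_vec_mul[OF rg T uc] by simp
    also have "\<dots> = vec_smult K n \<mu> (mat_vec K n (\<rho> g) u)" unfolding e using mat_vec_smult[OF rg lw(1) uc] .
    finally show "mat_vec K n (\<rho> g) u \<in> S" unfolding S_def using rg uc by (auto intro: mat_vec_closed)
  qed
  have "S \<subseteq> vec_carrier K n" unfolding S_def by auto
  then have "S = {vec_zero K n} \<or> S = vec_carrier K n"
    using irr S0 Sadd Ssm Sinv unfolding irreducible_rep_def by blast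
  moreover have "w \<in> S" using lw unfolding S_def by auto
  ultimately have SV: "S = vec_carrier K n" using lw(3) by auto
  show ?thesis
  proof (intro bexI[OF _ lw(1)] allI impI)
    fix i j assume i: "i < n" and j: "j < n"
    have "unitv n j \<in> S" using SV unitv_closed by auto
    then have "mat_vec K n T (unitv n j) = vec_smult K n \<mu> (unitv n j)" unfolding S_def by auto
    then have "mat_vec K n T (unitv n j) i = vec_smult K n \<mu> (unitv n j) i" by simp
    then show "T (i,j) = (if i = j then \<mu> else \<zero>\<^bsub>K\<^esub>)"
      using mat_vec_unitv[OF T i j] i lw(1) by (auto simp: entries unitv_def split: if_splits)
  qed
qed

lemma (in cring) ideal_plus_mult:
  assumes J: "ideal J R" and L: "ideal L R" and a: "a \<in> carrier R"
  shows "ideal {x. \<exists>j\<in>J. \<exists>y\<in>L. x = j \<oplus> a \<otimes> y} R"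
proof -
  have Jc: "\<And>j. j \<in> J \<Longrightarrow> j \<in> carrier R" using ideal.Icarr[OF J] .
  have Lc: "\<And>j. j \<in> L \<Longrightarrow> j \<in> carrier R" using ideal.Icarr[OF L] .
  note Ja = additive_subgroup.a_closed[OF ideal.axioms(1)[OF J]]
  note La = additive_subgroup.a_closed[OF ideal.axioms(1)[OF L]]
  note Ji = additive_subgroup.a_inv_closed[OF ideal.axioms(1)[OF J]]
  note Li = additive_subgroup.a_inv_closed[OF ideal.axioms(1)[OF L]]
  note J0 = additive_subgroup.zero_closed[OF ideal.axioms(1)[OF J]]
  note L0 = additive_subgroup.zero_closed[OF ideal.axioms(1)[OF L]]
  show ?thesis
  proof (rule idealI)
  show "ring R" by (rule ring_axioms)
  show "subgroup {x. \<exists>j\<in>J. \<exists>y\<in>L. x = j \<oplus> a \<otimes> y} (add_monoid R)"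
  proof (rule add.subgroupI)
    show "{x. \<exists>j\<in>J. \<exists>y\<in>L. x = j \<oplus> a \<otimes> y} \<subseteq> carrier R" using Jc Lc a by auto
    show "{x. \<exists>j\<in>J. \<exists>y\<in>L. x = j \<oplus> a \<otimes> y} \<noteq> {}" using J0 L0 by blast
  next
    fix x assume "x \<in> {x. \<exists>j\<in>J. \<exists>y\<in>L. x = j \<oplus> a \<otimes> y}"
    then obtain j y where jy: "j \<in> J" "y \<in> L" "x = j \<oplus> a \<otimes> y" by auto
    have "\<ominus> x = (\<ominus> j) \<oplus> a \<otimes> (\<ominus> y)" using jy Jc Lc a by simp algebra
    then show "\<ominus> x \<in> {x. \<exists>j\<in>J. \<exists>y\<in>L. x = j \<oplus> a \<otimes> y}" using jy Ji Li by blast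
  next
    fix x x' assume "x \<in> {x. \<exists>j\<in>J. \<exists>y\<in>L. x = j \<oplus> a \<otimes> y}" "x' \<in> {x. \<exists>j\<in>J. \<exists>y\<in>L. x = j \<oplus> a \<otimes> y}"
    then obtain j y j' y' where jy: "j \<in> J" "y \<in> L" "x = j \<oplus> a \<otimes> y" "j' \<in> J" "y' \<in> L" "x' = j' \<oplus> a \<otimes> y'" by auto
    have "x \<oplus> x' = (j \<oplus> j') \<oplus> a \<otimes> (y \<oplus> y')" using jy Jc Lc a by simp algebra
    then show "x \<oplus> x' \<in> {x. \<exists>j\<in>J. \<exists>y\<in>L. x = j \<oplus> a \<otimes> y}" using jy Ja La by blast
  qed
next
  fix x r assume "x \<in> {x. \<exists>j\<in>J. \<exists>y\<in>L. x = j \<oplus> a \<otimes> y}" and r: "r \<in> carrier R"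
  then obtain j y where jy: "j \<in> J" "y \<in> L" "x = j \<oplus> a \<otimes> y" by auto
  have e1: "r \<otimes> x = (r \<otimes> j) \<oplus> a \<otimes> (r \<otimes> y)" using jy Jc Lc a r by simp algebra
  have e2: "x \<otimes> r = (r \<otimes> j) \<oplus> a \<otimes> (r \<otimes> y)" using jy Jc Lc a r by simp algebra
  have "r \<otimes> j \<in> J" "r \<otimes> y \<in> L" using jy r ideal.I_l_closed[OF J] ideal.I_l_closed[OF L] by auto
  then show "r \<otimes> x \<in> {x. \<exists>j\<in>J. \<exists>y\<in>L. x = j \<oplus> a \<otimes> y}" "x \<otimes> r \<in> {x. \<exists>j\<in>J. \<exists>y\<in>L. x = j \<oplus> a \<otimes> y}"
    using e1 e2 by blast+
qed
qed

lemma (in cring) finsum_in_ideal: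
  assumes J: "ideal J R" and "finite B" and "\<And>k. k \<in> B \<Longrightarrow> f k \<in> J"
  shows "(\<Oplus>k\<in>B. f k) \<in> J"
  using assms(2,3)
proof (induct B rule: finite_induct)
  case empty
  then show ?case using additive_subgroup.zero_closed[OF ideal.axioms(1)[OF J]] by simp
next
  case (insert x F)
  have "(\<Oplus>k\<in>insert x F. f k) = f x \<oplus> (\<Oplus>k\<in>F. f k)"
    using insert ideal.Icarr[OF J] by (intro finsum_insert) auto
  then show ?case using insert additive_subgroup.a_closed[OF ideal.axioms(1)[OF J]] by simp
qed

section \<open>Local ring setup\<close>

lemma local_max_ideal_facts:
  fixes A :: "'a ring"
  assumes "local_ring A"
  shows "cring A" "ideal (max_ideal A) A" "maximalideal (max_ideal A) A" "field (A Quot max_ideal A)"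
    "\<one>\<^bsub>A\<^esub> \<notin> max_ideal A"
proof -
  show cr: "cring A" and id: "ideal (max_ideal A) A" using assms unfolding local_ring_def by auto
  interpret cring A by (rule cr)
  show one: "\<one>\<^bsub>A\<^esub> \<notin> max_ideal A" unfolding max_ideal_def by simp
  show mx: "maximalideal (max_ideal A) A"
  proof (intro maximalideal.intro id maximalideal_axioms.intro)
    show "carrier A \<noteq> max_ideal A" using one by auto
    fix J assume J: "ideal J A" "max_ideal A \<subseteq> J" "J \<subseteq> carrier A"
    show "J = max_ideal A \<or> J = carrier A"
    proof (cases "J \<inter> Units A = {}")
      case True
      then have "J \<subseteq> max_ideal A" using J unfolding max_ideal_def by auto
      then show ?thesis using J by auto
    next
      case False
      then obtain u where u: "u \<in> J" "u \<in> Units A" by auto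
      have "\<one>\<^bsub>A\<^esub> \<in> J" using ideal.I_l_closed[OF J(1) u(1), of "inv\<^bsub>A\<^esub> u"] u(2) by simp
      then show ?thesis using ideal.one_imp_carrier[OF J(1)] by auto
    qed
  qed
  show "field (A Quot max_ideal A)" using maximalideal.quotient_is_field[OF mx cr] .
qed

lemma quot_carrier_iff:
  "X \<in> carrier (A Quot I) \<longleftrightarrow> (\<exists>a\<in>carrier A. X = I +>\<^bsub>A\<^esub> a)"
  by (auto simp: FactRing_def A_RCOSETS_def' RCOSETS_def)

lemma mk_rhc:
  assumes "cring R" "cring S" "h \<in> ring_hom R S"
  shows "ring_hom_cring R S h"
  using assms by (intro ring_hom_cringI ring_hom_ringI2) (auto simp: cring_def)

lemma phi_p_max:
  fixes W :: "'w ring" and A :: "'a ring"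
  assumes wf: "witt_Fbar W l" and fl: "fin_length_local_W_alg W A \<phi>"
  shows "\<phi> (add_pow W l \<one>\<^bsub>W\<^esub>) \<in> max_ideal A"
proof -
  define p where "p = add_pow W l \<one>\<^bsub>W\<^esub>"
  have dom: "domain W" using wf unfolding witt_Fbar_def by simp
  interpret W: domain W by (rule dom)
  have pnu: "p \<notin> Units W" and dec: "\<forall>x \<in> carrier W - {\<zero>\<^bsub>W\<^esub>}. \<exists>u \<in> Units W. \<exists>k::nat. x = u \<otimes>\<^bsub>W\<^esub> (p [^]\<^bsub>W\<^esub> k)"
    using wf unfolding witt_Fbar_def Let_def p_def by auto
  have loc: "local_ring A" and hom: "\<phi> \<in> ring_hom W A"
    and res: "\<forall>a\<in>carrier A. \<exists>w\<in>carrier W. a \<ominus>\<^bsub>A\<^esub> \<phi> w \<in> max_ideal A"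
    using fl unfolding fin_length_local_W_alg_def by auto
  note LF = local_max_ideal_facts[OF loc]
  interpret A: cring A by (rule LF(1))
  interpret h: ring_hom_cring W A \<phi> by (rule mk_rhc[OF W.cring_axioms LF(1) hom])
  have pc: "p \<in> carrier W" unfolding p_def by simp
  have pu: "\<not> (\<exists>q\<in>carrier W. p \<otimes>\<^bsub>W\<^esub> q = \<one>\<^bsub>W\<^esub>)"
  proof
    assume "\<exists>q\<in>carrier W. p \<otimes>\<^bsub>W\<^esub> q = \<one>\<^bsub>W\<^esub>"
    then obtain q where q: "q \<in> carrier W" "p \<otimes>\<^bsub>W\<^esub> q = \<one>\<^bsub>W\<^esub>" by auto
    then have "q \<otimes>\<^bsub>W\<^esub> p = \<one>\<^bsub>W\<^esub>" using pc by (simp add: W.m_comm)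
    then have "p \<in> Units W" using pc q unfolding Units_def by blast
    then show False using pnu by simp
  qed
  show ?thesis unfolding p_def[symmetric]
  proof (rule ccontr)
    assume "\<phi> p \<notin> max_ideal A"
    then have phu: "\<phi> p \<in> Units A" using pc unfolding max_ideal_def by auto
    define a where "a = inv\<^bsub>A\<^esub> (\<phi> p)"
    have ac: "a \<in> carrier A" unfolding a_def using phu by simp
    obtain w where w: "w \<in> carrier W" "a \<ominus>\<^bsub>A\<^esub> \<phi> w \<in> max_ideal A" using res ac by blast
    have "\<phi> p \<otimes>\<^bsub>A\<^esub> (a \<ominus>\<^bsub>A\<^esub> \<phi> w) \<in> max_ideal A"
      using ideal.I_l_closed[OF LF(2) w(2)] pc by simp
    moreover have "\<phi> p \<otimes>\<^bsub>A\<^esub> (a \<ominus>\<^bsub>A\<^esub> \<phi> w) = \<phi> (\<one>\<^bsub>W\<^esub> \<ominus>\<^bsub>W\<^esub> p \<otimes>\<^bsub>W\<^esub> w)"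
    proof -
      have "\<phi> p \<otimes>\<^bsub>A\<^esub> a = \<one>\<^bsub>A\<^esub>" unfolding a_def using phu by simp
      moreover have "\<phi> (\<one>\<^bsub>W\<^esub> \<ominus>\<^bsub>W\<^esub> p \<otimes>\<^bsub>W\<^esub> w) = \<one>\<^bsub>A\<^esub> \<ominus>\<^bsub>A\<^esub> \<phi> p \<otimes>\<^bsub>A\<^esub> \<phi> w"
        using pc w(1) by (simp add: W.minus_eq A.minus_eq)
      moreover have "\<phi> p \<otimes>\<^bsub>A\<^esub> (a \<ominus>\<^bsub>A\<^esub> \<phi> w) = \<phi> p \<otimes>\<^bsub>A\<^esub> a \<ominus>\<^bsub>A\<^esub> \<phi> p \<otimes>\<^bsub>A\<^esub> \<phi> w"
        using pc w(1) ac h.hom_closed[OF pc] h.hom_closed[OF w(1)] by algebra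
      ultimately show ?thesis by simp
    qed
    ultimately have inm: "\<phi> (\<one>\<^bsub>W\<^esub> \<ominus>\<^bsub>W\<^esub> p \<otimes>\<^bsub>W\<^esub> w) \<in> max_ideal A" by simp
    define z where "z = \<one>\<^bsub>W\<^esub> \<ominus>\<^bsub>W\<^esub> p \<otimes>\<^bsub>W\<^esub> w"
    have zc: "z \<in> carrier W" unfolding z_def using pc w(1) by simp
    have zu: "z \<in> Units W"
    proof (cases "z = \<zero>\<^bsub>W\<^esub>")
      case True
      have "p \<otimes>\<^bsub>W\<^esub> w = \<one>\<^bsub>W\<^esub> \<oplus>\<^bsub>W\<^esub> \<ominus>\<^bsub>W\<^esub> (\<one>\<^bsub>W\<^esub> \<ominus>\<^bsub>W\<^esub> p \<otimes>\<^bsub>W\<^esub> w)"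
        using pc w(1) by algebra
      then have "p \<otimes>\<^bsub>W\<^esub> w = \<one>\<^bsub>W\<^esub>" using True unfolding z_def by simp
      then show ?thesis using pu w(1) by blast
    next
      case False
      then obtain u k where uk: "u \<in> Units W" "z = u \<otimes>\<^bsub>W\<^esub> p [^]\<^bsub>W\<^esub> (k::nat)" using dec zc by blast
      show ?thesis
      proof (cases k)
        case 0
        then show ?thesis using uk by simp
      next
        case (Suc k')
        have uc: "u \<in> carrier W" using uk W.Units_closed by blast
        have "z = u \<otimes>\<^bsub>W\<^esub> (p [^]\<^bsub>W\<^esub> k' \<otimes>\<^bsub>W\<^esub> p)" using uk Suc by simp
        then have e: "\<one>\<^bsub>W\<^esub> \<ominus>\<^bsub>W\<^esub> p \<otimes>\<^bsub>W\<^esub> w = u \<otimes>\<^bsub>W\<^esub> (p [^]\<^bsub>W\<^esub> k' \<otimes>\<^bsub>W\<^esub> p)" unfolding z_def .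
        have pk: "p [^]\<^bsub>W\<^esub> k' \<in> carrier W" using pc by simp
        have "\<one>\<^bsub>W\<^esub> = (\<one>\<^bsub>W\<^esub> \<ominus>\<^bsub>W\<^esub> p \<otimes>\<^bsub>W\<^esub> w) \<oplus>\<^bsub>W\<^esub> p \<otimes>\<^bsub>W\<^esub> w"
          using pc w(1) by algebra
        also have "\<dots> = u \<otimes>\<^bsub>W\<^esub> (p [^]\<^bsub>W\<^esub> k' \<otimes>\<^bsub>W\<^esub> p) \<oplus>\<^bsub>W\<^esub> p \<otimes>\<^bsub>W\<^esub> w" unfolding e ..
        also have "\<dots> = p \<otimes>\<^bsub>W\<^esub> (w \<oplus>\<^bsub>W\<^esub> u \<otimes>\<^bsub>W\<^esub> p [^]\<^bsub>W\<^esub> k')"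
          using pc w(1) uc pk by algebra
        finally have "\<one>\<^bsub>W\<^esub> = p \<otimes>\<^bsub>W\<^esub> (w \<oplus>\<^bsub>W\<^esub> u \<otimes>\<^bsub>W\<^esub> p [^]\<^bsub>W\<^esub> k')" .
        then show ?thesis using pu w(1) uc pc by (metis W.a_closed W.m_closed W.nat_pow_closed)
      qed
    qed
    have "\<phi> z \<in> Units A"
    proof -
      have zi: "inv\<^bsub>W\<^esub> z \<in> carrier W" using zu by simp
      have "\<phi> z \<otimes>\<^bsub>A\<^esub> \<phi> (inv\<^bsub>W\<^esub> z) = \<phi> (z \<otimes>\<^bsub>W\<^esub> inv\<^bsub>W\<^esub> z)" using zc zi by simp
      also have "\<dots> = \<one>\<^bsub>A\<^esub>" using zu by simp
      finally have "\<phi> z \<otimes>\<^bsub>A\<^esub> \<phi> (inv\<^bsub>W\<^esub> z) = \<one>\<^bsub>A\<^esub>" .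
      moreover have "\<phi> (inv\<^bsub>W\<^esub> z) \<in> carrier A" "\<phi> z \<in> carrier A" using zi zc by auto
      ultimately show ?thesis unfolding Units_def by (metis (mono_tags, lifting) A.m_comm mem_Collect_eq)
    qed
    then show False using inm unfolding z_def max_ideal_def by simp
  qed
qed

lemma hom_pow_simple:
  assumes "h \<in> ring_hom R S" "ring R" "ring S" "x \<in> carrier R"
  shows "h (x [^]\<^bsub>R\<^esub> (k::nat)) = h x [^]\<^bsub>S\<^esub> k"
proof (induct k)
  case 0
  then show ?case using assms by (simp add: ring_hom_one)
next
  case (Suc k)
  have "x [^]\<^bsub>R\<^esub> k \<in> carrier R" using assms by (simp add: monoid.nat_pow_closed ring.is_monoid)
  then show ?case using Suc assms by (simp add: ring_hom_mult)
qed

lemma quot_alg_closed: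
  fixes W :: "'w ring" and A :: "'a ring"
  assumes wf: "witt_Fbar W l" and fl: "fin_length_local_W_alg W A \<phi>"
  shows "alg_closed_sum (A Quot max_ideal A)"
proof -
  define p where "p = add_pow W l \<one>\<^bsub>W\<^esub>"
  define m where "m = max_ideal A"
  define K where "K = A Quot m"
  have dom: "domain W" using wf unfolding witt_Fbar_def by simp
  interpret W: domain W by (rule dom)
  have Wroot: "\<forall>M::nat. M \<ge> 1 \<longrightarrow> (\<forall>c \<in> {..<M} \<rightarrow> carrier W. \<exists>x \<in> carrier W. \<exists>d \<in> carrier W.
          x [^]\<^bsub>W\<^esub> M \<oplus>\<^bsub>W\<^esub> (\<Oplus>\<^bsub>W\<^esub> i\<in>{..<M}. c i \<otimes>\<^bsub>W\<^esub> x [^]\<^bsub>W\<^esub> i) = p \<otimes>\<^bsub>W\<^esub> d)"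
    using wf unfolding witt_Fbar_def Let_def p_def by (elim conjE) assumption
  have loc: "local_ring A" and hom: "\<phi> \<in> ring_hom W A"
    and res: "\<forall>a\<in>carrier A. \<exists>w\<in>carrier W. a \<ominus>\<^bsub>A\<^esub> \<phi> w \<in> max_ideal A"
    using fl unfolding fin_length_local_W_alg_def by auto
  note LF = local_max_ideal_facts[OF loc]
  interpret A: cring A by (rule LF(1))
  interpret K: field K unfolding K_def m_def by (rule LF(4))
  have pm: "\<phi> p \<in> m" unfolding p_def m_def by (rule phi_p_max[OF wf fl])
  define \<psi> where "\<psi> = ((+>\<^bsub>A\<^esub>) m) \<circ> \<phi>"
  have psih: "\<psi> \<in> ring_hom W K" unfolding \<psi>_def K_def m_def
    by (rule ring_hom_trans[OF hom ideal.rcos_ring_hom[OF LF(2)]])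
  interpret ps: ring_hom_cring W K \<psi> by (rule mk_rhc[OF W.cring_axioms K.cring_axioms psih])
  have psp: "\<psi> p = \<zero>\<^bsub>K\<^esub>"
    unfolding \<psi>_def K_def using A.a_rcos_zero[OF LF(2)] pm by (simp add: FactRing_def m_def)
  show ?thesis unfolding alg_closed_sum_def K_def[symmetric] m_def[symmetric]
  proof (intro allI impI ballI)
    fix M :: nat and c assume M: "M \<ge> 1" and c: "c \<in> {..<M} \<rightarrow> carrier K"
    have "\<forall>i\<in>{..<M}. \<exists>w\<in>carrier W. c i = \<psi> w"
    proof
      fix i assume i: "i \<in> {..<M}"
      have "c i \<in> carrier K" using c i by auto
      then have "\<exists>a\<in>carrier A. c i = m +>\<^bsub>A\<^esub> a" unfolding K_def quot_carrier_iff .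
      then obtain a where a: "a \<in> carrier A" "c i = m +>\<^bsub>A\<^esub> a" by blast
      obtain w where w: "w \<in> carrier W" "a \<ominus>\<^bsub>A\<^esub> \<phi> w \<in> m" using res a unfolding m_def by blast
      have pw: "\<phi> w \<in> carrier A" using ring_hom_closed[OF hom w(1)] .
      have "m +>\<^bsub>A\<^esub> a = m +>\<^bsub>A\<^esub> \<phi> w"
        using A.quotient_eq_iff_same_a_r_cos[OF LF(2)[folded m_def] a(1) pw] w(2) by simp
      then have "c i = \<psi> w" using a(2) unfolding \<psi>_def by simp
      then show "\<exists>w\<in>carrier W. c i = \<psi> w" using w(1) by blast
    qed
    then obtain f where f: "\<forall>i\<in>{..<M}. f i \<in> carrier W \<and> c i = \<psi> (f i)"
      using bchoice[of "{..<M}" "\<lambda>i w. w \<in> carrier W \<and> c i = \<psi> w"] by blast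
    then have fc: "f \<in> {..<M} \<rightarrow> carrier W" by auto
    obtain x d where xd: "x \<in> carrier W" "d \<in> carrier W"
      "x [^]\<^bsub>W\<^esub> M \<oplus>\<^bsub>W\<^esub> (\<Oplus>\<^bsub>W\<^esub> i\<in>{..<M}. f i \<otimes>\<^bsub>W\<^esub> x [^]\<^bsub>W\<^esub> i) = p \<otimes>\<^bsub>W\<^esub> d"
      using Wroot[rule_format, OF M fc] by blast
    have powc: "\<And>k. \<psi> (x [^]\<^bsub>W\<^esub> (k::nat)) = \<psi> x [^]\<^bsub>K\<^esub> k"
      using hom_pow_simple[OF psih W.ring_axioms K.ring_axioms xd(1)] .
    have "\<psi> (x [^]\<^bsub>W\<^esub> M \<oplus>\<^bsub>W\<^esub> (\<Oplus>\<^bsub>W\<^esub> i\<in>{..<M}. f i \<otimes>\<^bsub>W\<^esub> x [^]\<^bsub>W\<^esub> i))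
        = \<psi> x [^]\<^bsub>K\<^esub> M \<oplus>\<^bsub>K\<^esub> (\<Oplus>\<^bsub>K\<^esub> i\<in>{..<M}. c i \<otimes>\<^bsub>K\<^esub> \<psi> x [^]\<^bsub>K\<^esub> i)"
    proof -
      have s1: "(\<Oplus>\<^bsub>W\<^esub> i\<in>{..<M}. f i \<otimes>\<^bsub>W\<^esub> x [^]\<^bsub>W\<^esub> i) \<in> carrier W"
        using fc xd by (intro W.finsum_closed) auto
      have "\<psi> (\<Oplus>\<^bsub>W\<^esub> i\<in>{..<M}. f i \<otimes>\<^bsub>W\<^esub> x [^]\<^bsub>W\<^esub> i) = (\<Oplus>\<^bsub>K\<^esub> i\<in>{..<M}. (\<psi> \<circ> (\<lambda>i. f i \<otimes>\<^bsub>W\<^esub> x [^]\<^bsub>W\<^esub> i)) i)"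
        using fc xd by (intro ps.hom_finsum) auto
      also have "\<dots> = (\<Oplus>\<^bsub>K\<^esub> i\<in>{..<M}. c i \<otimes>\<^bsub>K\<^esub> \<psi> x [^]\<^bsub>K\<^esub> i)"
        using fc xd f c powc by (intro K.finsum_cong) auto
      finally show ?thesis using s1 xd(1) powc by simp
    qed
    moreover have "\<psi> (p \<otimes>\<^bsub>W\<^esub> d) = \<zero>\<^bsub>K\<^esub>" using psp xd(2) by (simp add: p_def)
    ultimately have "\<psi> x [^]\<^bsub>K\<^esub> M \<oplus>\<^bsub>K\<^esub> (\<Oplus>\<^bsub>K\<^esub> i\<in>{..<M}. c i \<otimes>\<^bsub>K\<^esub> \<psi> x [^]\<^bsub>K\<^esub> i) = \<zero>\<^bsub>K\<^esub>"
      using xd(3) by simp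
    then show "\<exists>x\<in>carrier K. x [^]\<^bsub>K\<^esub> M \<oplus>\<^bsub>K\<^esub> (\<Oplus>\<^bsub>K\<^esub> i\<in>{..<M}. c i \<otimes>\<^bsub>K\<^esub> x [^]\<^bsub>K\<^esub> i) = \<zero>\<^bsub>K\<^esub>"
      using xd(1) by blast
  qed
qed

lemma reduce_closed:
  fixes A :: "'a ring"
  assumes loc: "local_ring A" and M: "M \<in> mat_carrier A n"
  shows "reduce_mat A n M \<in> mat_carrier (A Quot max_ideal A) n"
proof -
  note LF = local_max_ideal_facts[OF loc]
  show ?thesis unfolding reduce_mat_def mat_carrier_def
    using ring_hom_closed[OF ideal.rcos_ring_hom[OF LF(2)]] mat_carrierD[OF M] by auto
qed

lemma reduce_mul:
  fixes A :: "'a ring"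
  assumes loc: "local_ring A" and M: "M \<in> mat_carrier A n" and N: "N \<in> mat_carrier A n"
  shows "reduce_mat A n (mat_mul A n M N) = mat_mul (A Quot max_ideal A) n (reduce_mat A n M) (reduce_mat A n N)"
proof -
  note LF = local_max_ideal_facts[OF loc]
  interpret A: cring A by (rule LF(1))
  interpret K: field "A Quot max_ideal A" by (rule LF(4))
  interpret pi: ring_hom_cring A "A Quot max_ideal A" "(+>\<^bsub>A\<^esub>) (max_ideal A)"
    by (rule mk_rhc[OF LF(1) K.cring_axioms ideal.rcos_ring_hom[OF LF(2)]])
  show ?thesis
  proof (rule mat_eqI)
    show "reduce_mat A n (mat_mul A n M N) \<in> mat_carrier (A Quot max_ideal A) n"
      using reduce_closed[OF loc A.mat_mul_closed[OF M N]] .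
    show "mat_mul (A Quot max_ideal A) n (reduce_mat A n M) (reduce_mat A n N) \<in> mat_carrier (A Quot max_ideal A) n"
      by (intro K.mat_mul_closed reduce_closed[OF loc] M N)
    fix i j assume ij: "i < n" "j < n"
    note cM = mat_carrierD[OF M] and cN = mat_carrierD[OF N]
    have "reduce_mat A n (mat_mul A n M N) (i,j) = max_ideal A +>\<^bsub>A\<^esub> (\<Oplus>\<^bsub>A\<^esub> k\<in>{..<n}. M (i,k) \<otimes>\<^bsub>A\<^esub> N (k,j))"
      using ij by (simp add: reduce_mat_def mat_mul_entry)
    also have "\<dots> = (\<Oplus>\<^bsub>A Quot max_ideal A\<^esub> k\<in>{..<n}. ((+>\<^bsub>A\<^esub>) (max_ideal A) \<circ> (\<lambda>k. M (i,k) \<otimes>\<^bsub>A\<^esub> N (k,j))) k)"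
      using ij cM cN by (intro pi.hom_finsum) auto
    also have "\<dots> = (\<Oplus>\<^bsub>A Quot max_ideal A\<^esub> k\<in>{..<n}. (max_ideal A +>\<^bsub>A\<^esub> M (i,k)) \<otimes>\<^bsub>A Quot max_ideal A\<^esub> (max_ideal A +>\<^bsub>A\<^esub> N (k,j)))"
      using ij cM cN pi.hom_closed by (intro K.finsum_cong) auto
    also have "\<dots> = mat_mul (A Quot max_ideal A) n (reduce_mat A n M) (reduce_mat A n N) (i,j)"
      unfolding mat_mul_entry[OF ij] using ij cM cN pi.hom_closed
      by (intro K.finsum_cong) (auto simp: reduce_mat_def)
    finally show "reduce_mat A n (mat_mul A n M N) (i,j) = mat_mul (A Quot max_ideal A) n (reduce_mat A n M) (reduce_mat A n N) (i,j)" .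
  qed
qed

lemma ideal_W_submodule:
  assumes "ideal I A" "\<phi> \<in> ring_hom W A"
  shows "W_submodule W A \<phi> I"
  unfolding W_submodule_def using assms
  by (auto intro: ideal.Icarr additive_subgroup.zero_closed[OF ideal.axioms(1)]
      additive_subgroup.a_closed[OF ideal.axioms(1)] ideal.I_l_closed ring_hom_closed)

lemma wf_up:
  fixes A :: "'a ring" and W :: "'w ring"
  assumes fl: "W_finite_length W A \<phi>" and hom: "\<phi> \<in> ring_hom W A"
  shows "wf {(X,Y). ideal X A \<and> ideal Y A \<and> Y \<subset> X}"
proof -
  obtain N where N: "\<forall>M::nat \<Rightarrow> 'a set. \<forall>k::nat.
     (\<forall>i\<le>k. W_submodule W A \<phi> (M i)) \<and> (\<forall>i<k. M i \<subset> M (Suc i)) \<longrightarrow> k \<le> N"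
    using fl unfolding W_finite_length_def by blast
  show ?thesis unfolding wf_iff_no_infinite_down_chain
  proof
    assume "\<exists>f. \<forall>i. (f (Suc i), f i) \<in> {(X, Y). ideal X A \<and> ideal Y A \<and> Y \<subset> X}"
    then obtain f where f: "\<And>i. ideal (f i) A" "\<And>i. f i \<subset> f (Suc i)" by blast
    have "\<forall>i\<le>Suc N. W_submodule W A \<phi> (f i)" using f(1) ideal_W_submodule[OF _ hom] by simp
    moreover have "(\<forall>i\<le>Suc N. W_submodule W A \<phi> (f i)) \<and> (\<forall>i<Suc N. f i \<subset> f (Suc i)) \<longrightarrow> Suc N \<le> N"
      using spec[OF spec[OF N, of f], of "Suc N"] .
    ultimately have "Suc N \<le> N" using f(2) by blast
    then show False by simp
  qed
qed

lemma wf_down: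
  fixes A :: "'a ring" and W :: "'w ring"
  assumes fl: "W_finite_length W A \<phi>" and hom: "\<phi> \<in> ring_hom W A"
  shows "wf {(X,Y). ideal X A \<and> ideal Y A \<and> X \<subset> Y}"
proof -
  obtain N where N: "\<forall>M::nat \<Rightarrow> 'a set. \<forall>k::nat.
     (\<forall>i\<le>k. W_submodule W A \<phi> (M i)) \<and> (\<forall>i<k. M i \<subset> M (Suc i)) \<longrightarrow> k \<le> N"
    using fl unfolding W_finite_length_def by blast
  show ?thesis unfolding wf_iff_no_infinite_down_chain
  proof
    assume "\<exists>f. \<forall>i. (f (Suc i), f i) \<in> {(X, Y). ideal X A \<and> ideal Y A \<and> X \<subset> Y}"
    then obtain f where f: "\<And>i. ideal (f i) A" "\<And>i. f (Suc i) \<subset> f i" by blast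
    define g where "g i = f (Suc N - i)" for i
    have "\<forall>i<Suc N. g i \<subset> g (Suc i)"
    proof (intro allI impI)
      fix i assume "i < Suc N"
      then have "Suc N - i = Suc (Suc N - Suc i)" by simp
      then show "g i \<subset> g (Suc i)" unfolding g_def using f(2) by metis
    qed
    moreover have "\<forall>i\<le>Suc N. W_submodule W A \<phi> (g i)" unfolding g_def using f(1) ideal_W_submodule[OF _ hom] by simp
    moreover have "(\<forall>i\<le>Suc N. W_submodule W A \<phi> (g i)) \<and> (\<forall>i<Suc N. g i \<subset> g (Suc i)) \<longrightarrow> Suc N \<le> N"
      using spec[OF spec[OF N, of g], of "Suc N"] .
    ultimately have "Suc N \<le> N" by blast
    then show False by simp
  qed
qed

definition CM :: "'a ring \<Rightarrow> nat \<Rightarrow> 'g set \<Rightarrow> ('g \<Rightarrow> nat \<times> nat \<Rightarrow> 'a) \<Rightarrow> 'a set \<Rightarrow> (nat \<times> nat \<Rightarrow> 'a) \<Rightarrow> bool" where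
  "CM A n H \<eta> J M \<longleftrightarrow> (\<forall>h\<in>H. \<forall>i<n. \<forall>j<n. mat_mul A n M (\<eta> h) (i,j) \<ominus>\<^bsub>A\<^esub> mat_mul A n (\<eta> h) M (i,j) \<in> J)"

definition SM :: "'a ring \<Rightarrow> nat \<Rightarrow> 'a set \<Rightarrow> (nat \<times> nat \<Rightarrow> 'a) \<Rightarrow> bool" where
  "SM A n J M \<longleftrightarrow> (\<exists>c\<in>carrier A. \<forall>i<n. \<forall>j<n. M (i,j) \<ominus>\<^bsub>A\<^esub> (if i = j then c else \<zero>\<^bsub>A\<^esub>) \<in> J)"

lemma base_m:
  fixes A :: "'a ring"
  assumes loc: "local_ring A" and AC: "alg_closed_sum (A Quot max_ideal A)"
    and irr: "residually_irreducible A n H \<eta>" and \<eta>c: "\<forall>h\<in>H. \<eta> h \<in> mat_carrier A n"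
    and M: "M \<in> mat_carrier A n" and cm: "CM A n H \<eta> (max_ideal A) M"
  shows "SM A n (max_ideal A) M"
proof -
  note LF = local_max_ideal_facts[OF loc]
  define m where "m = max_ideal A"
  define K where "K = A Quot m"
  interpret A: cring A by (rule LF(1))
  interpret K: field K unfolding K_def m_def by (rule LF(4))
  have mi: "ideal m A" unfolding m_def by (rule LF(2))
  define Mb where "Mb = reduce_mat A n M"
  have Mb: "Mb \<in> mat_carrier K n" unfolding Mb_def K_def m_def by (rule reduce_closed[OF loc M])
  have rc: "\<forall>h\<in>H. reduce_mat A n (\<eta> h) \<in> mat_carrier K n"
    unfolding K_def m_def using reduce_closed[OF loc] \<eta>c by blast
  have red_eq: "reduce_mat A n X = reduce_mat A n Y"
    if X: "X \<in> mat_carrier A n" and Y: "Y \<in> mat_carrier A n"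
      and d: "\<forall>i<n. \<forall>j<n. X (i,j) \<ominus>\<^bsub>A\<^esub> Y (i,j) \<in> m" for X Y
    unfolding reduce_mat_def
  proof (rule restrict_ext)
    fix p assume "p \<in> {..<n} \<times> {..<n}"
    then obtain i j where p: "p = (i,j)" "i < n" "j < n" by auto
    show "max_ideal A +>\<^bsub>A\<^esub> X p = max_ideal A +>\<^bsub>A\<^esub> Y p"
      using A.quotient_eq_iff_same_a_r_cos[OF mi mat_carrierD[OF X p(2,3)] mat_carrierD[OF Y p(2,3)]] d p
      unfolding m_def by auto
  qed
  have comm: "\<forall>h\<in>H. mat_mul K n Mb (reduce_mat A n (\<eta> h)) = mat_mul K n (reduce_mat A n (\<eta> h)) Mb"
  proof
    fix h assume h: "h \<in> H"
    have eh: "\<eta> h \<in> mat_carrier A n" using \<eta>c h by auto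
    have "mat_mul K n Mb (reduce_mat A n (\<eta> h)) = reduce_mat A n (mat_mul A n M (\<eta> h))"
      unfolding Mb_def K_def m_def using reduce_mul[OF loc M eh] by simp
    also have "\<dots> = reduce_mat A n (mat_mul A n (\<eta> h) M)"
      using red_eq[OF A.mat_mul_closed[OF M eh] A.mat_mul_closed[OF eh M]] cm h
      unfolding CM_def m_def by auto
    also have "\<dots> = mat_mul K n (reduce_mat A n (\<eta> h)) Mb"
      unfolding Mb_def K_def m_def using reduce_mul[OF loc eh M] by simp
    finally show "mat_mul K n Mb (reduce_mat A n (\<eta> h)) = mat_mul K n (reduce_mat A n (\<eta> h)) Mb" .
  qed
  have irr': "irreducible_rep K n H (\<lambda>g. reduce_mat A n (\<eta> g))"
    using irr unfolding residually_irreducible_def K_def m_def .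
  obtain \<mu> where \<mu>: "\<mu> \<in> carrier K" "\<forall>i<n. \<forall>j<n. Mb (i,j) = (if i = j then \<mu> else \<zero>\<^bsub>K\<^esub>)"
    using schur[OF K.field_axioms AC[folded m_def, folded K_def] irr' rc Mb comm] by blast
  obtain c where c: "c \<in> carrier A" "\<mu> = m +>\<^bsub>A\<^esub> c" using \<mu>(1) unfolding K_def quot_carrier_iff by blast
  have m0: "m +>\<^bsub>A\<^esub> \<zero>\<^bsub>A\<^esub> = m"
    using A.a_rcos_zero[OF mi] additive_subgroup.zero_closed[OF ideal.axioms(1)[OF mi]] by simp
  show ?thesis unfolding SM_def
  proof (intro bexI[OF _ c(1)] allI impI)
    fix i j assume ij: "i < n" "j < n"
    have e: "m +>\<^bsub>A\<^esub> M (i,j) = m +>\<^bsub>A\<^esub> (if i = j then c else \<zero>\<^bsub>A\<^esub>)"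
      using \<mu>(2) ij c(2) m0 unfolding Mb_def reduce_mat_def m_def K_def by (auto simp: FactRing_def)
    have dc: "(if i = j then c else \<zero>\<^bsub>A\<^esub>) \<in> carrier A" using c by auto
    show "M (i,j) \<ominus>\<^bsub>A\<^esub> (if i = j then c else \<zero>\<^bsub>A\<^esub>) \<in> max_ideal A"
      using A.quotient_eq_iff_same_a_r_cos[OF mi mat_carrierD[OF M ij] dc] e unfolding m_def by simp
  qed
qed

context cring
begin

lemma ideal_minus: "ideal J R \<Longrightarrow> x \<in> J \<Longrightarrow> y \<in> J \<Longrightarrow> x \<ominus> y \<in> J"
  unfolding minus_eq
  by (intro additive_subgroup.a_closed[OF ideal.axioms(1)] additive_subgroup.a_inv_closed[OF ideal.axioms(1)])

lemma ideal_add: "ideal J R \<Longrightarrow> x \<in> J \<Longrightarrow> y \<in> J \<Longrightarrow> x \<oplus> y \<in> J"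
  by (intro additive_subgroup.a_closed[OF ideal.axioms(1)])

lemma mat_mul_split_left:
  assumes M: "M \<in> mat_carrier R n" and X: "X \<in> mat_carrier R n" and Y: "Y \<in> mat_carrier R n"
    and Z: "Z \<in> mat_carrier R n" and N: "N \<in> mat_carrier R n" and a: "a \<in> carrier R"
    and e: "\<forall>i<n. \<forall>j<n. M (i,j) = X (i,j) \<oplus> Y (i,j) \<oplus> a \<otimes> Z (i,j)"
    and ij: "i < n" "j < n"
  shows "mat_mul R n M N (i,j) = mat_mul R n X N (i,j) \<oplus> mat_mul R n Y N (i,j) \<oplus> a \<otimes> mat_mul R n Z N (i,j)"
proof -
  note cX = mat_carrierD[OF X] and cY = mat_carrierD[OF Y] and cZ = mat_carrierD[OF Z] and cN = mat_carrierD[OF N]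
  have eqk: "M (i,k) \<otimes> N (k,j) = (X (i,k) \<otimes> N (k,j) \<oplus> Y (i,k) \<otimes> N (k,j)) \<oplus> a \<otimes> (Z (i,k) \<otimes> N (k,j))" if "k \<in> {..<n}" for k
  proof -
    have "X (i,k) \<in> carrier R" "Y (i,k) \<in> carrier R" "Z (i,k) \<in> carrier R" "N (k,j) \<in> carrier R"
      using that cX cY cZ cN ij by auto
    then show ?thesis using e that ij a by simp algebra
  qed
  have "mat_mul R n M N (i,j) = (\<Oplus>k\<in>{..<n}. (X (i,k) \<otimes> N (k,j) \<oplus> Y (i,k) \<otimes> N (k,j)) \<oplus> a \<otimes> (Z (i,k) \<otimes> N (k,j)))"
    unfolding mat_mul_entry[OF ij] using eqk cX cY cZ cN ij a by (intro finsum_cong) auto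
  also have "\<dots> = (\<Oplus>k\<in>{..<n}. X (i,k) \<otimes> N (k,j) \<oplus> Y (i,k) \<otimes> N (k,j)) \<oplus> (\<Oplus>k\<in>{..<n}. a \<otimes> (Z (i,k) \<otimes> N (k,j)))"
    using cX cY cZ cN ij a by (intro finsum_addf) auto
  also have "\<dots> = (\<Oplus>k\<in>{..<n}. X (i,k) \<otimes> N (k,j)) \<oplus> (\<Oplus>k\<in>{..<n}. Y (i,k) \<otimes> N (k,j)) \<oplus> a \<otimes> (\<Oplus>k\<in>{..<n}. Z (i,k) \<otimes> N (k,j))"
    using cX cY cZ cN ij a by (simp add: finsum_addf finsum_rdistr)
  finally show ?thesis using ij by (simp add: mat_mul_entry)
qed

lemma mat_mul_split_right:
  assumes M: "M \<in> mat_carrier R n" and X: "X \<in> mat_carrier R n" and Y: "Y \<in> mat_carrier R n"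
    and Z: "Z \<in> mat_carrier R n" and N: "N \<in> mat_carrier R n" and a: "a \<in> carrier R"
    and e: "\<forall>i<n. \<forall>j<n. M (i,j) = X (i,j) \<oplus> Y (i,j) \<oplus> a \<otimes> Z (i,j)"
    and ij: "i < n" "j < n"
  shows "mat_mul R n N M (i,j) = mat_mul R n N X (i,j) \<oplus> mat_mul R n N Y (i,j) \<oplus> a \<otimes> mat_mul R n N Z (i,j)"
proof -
  note cX = mat_carrierD[OF X] and cY = mat_carrierD[OF Y] and cZ = mat_carrierD[OF Z] and cN = mat_carrierD[OF N]
  have eqk: "N (i,k) \<otimes> M (k,j) = (N (i,k) \<otimes> X (k,j) \<oplus> N (i,k) \<otimes> Y (k,j)) \<oplus> a \<otimes> (N (i,k) \<otimes> Z (k,j))" if "k \<in> {..<n}" for k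
  proof -
    have "X (k,j) \<in> carrier R" "Y (k,j) \<in> carrier R" "Z (k,j) \<in> carrier R" "N (i,k) \<in> carrier R"
      using that cX cY cZ cN ij by auto
    then show ?thesis using e that ij a by simp algebra
  qed
  have "mat_mul R n N M (i,j) = (\<Oplus>k\<in>{..<n}. (N (i,k) \<otimes> X (k,j) \<oplus> N (i,k) \<otimes> Y (k,j)) \<oplus> a \<otimes> (N (i,k) \<otimes> Z (k,j)))"
    unfolding mat_mul_entry[OF ij] using eqk cX cY cZ cN ij a by (intro finsum_cong) auto
  also have "\<dots> = (\<Oplus>k\<in>{..<n}. N (i,k) \<otimes> X (k,j) \<oplus> N (i,k) \<otimes> Y (k,j)) \<oplus> (\<Oplus>k\<in>{..<n}. a \<otimes> (N (i,k) \<otimes> Z (k,j)))"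
    using cX cY cZ cN ij a by (intro finsum_addf) auto
  also have "\<dots> = (\<Oplus>k\<in>{..<n}. N (i,k) \<otimes> X (k,j)) \<oplus> (\<Oplus>k\<in>{..<n}. N (i,k) \<otimes> Y (k,j)) \<oplus> a \<otimes> (\<Oplus>k\<in>{..<n}. N (i,k) \<otimes> Z (k,j))"
    using cX cY cZ cN ij a by (simp add: finsum_addf finsum_rdistr)
  finally show ?thesis using ij by (simp add: mat_mul_entry)
qed

lemma mat_mul_ideal_left:
  assumes J: "ideal J R" and Y: "\<forall>i<n. \<forall>j<n. Y (i,j) \<in> J" and N: "N \<in> mat_carrier R n" and ij: "i < n" "j < n"
  shows "mat_mul R n Y N (i,j) \<in> J" "mat_mul R n N Y (i,j) \<in> J"
proof -
  show "mat_mul R n Y N (i,j) \<in> J" unfolding mat_mul_entry[OF ij]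
    using Y ij mat_carrierD[OF N] by (intro finsum_in_ideal[OF J]) (auto intro: ideal.I_r_closed[OF J])
  show "mat_mul R n N Y (i,j) \<in> J" unfolding mat_mul_entry[OF ij]
    using Y ij mat_carrierD[OF N] by (intro finsum_in_ideal[OF J]) (auto intro: ideal.I_l_closed[OF J])
qed

lemma scal_mul:
  assumes c: "c \<in> carrier R" and N: "N \<in> mat_carrier R n"
  shows "mat_mul R n (mat_smult R n c (mat_one R n)) N = mat_smult R n c N"
    "mat_mul R n N (mat_smult R n c (mat_one R n)) = mat_smult R n c N"
  using mat_smult_mul_left[OF c mat_one_closed N] mat_smult_mul_right[OF c N mat_one_closed]
    mat_one_left[OF N] mat_one_right[OF N] by simp_all

end

lemma schur_A_all:
  fixes A :: "'a ring" and W :: "'w ring"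
  assumes loc: "local_ring A" and AC: "alg_closed_sum (A Quot max_ideal A)"
    and fl: "W_finite_length W A \<phi>" and hom: "\<phi> \<in> ring_hom W A"
    and irr: "residually_irreducible A n H \<eta>" and \<eta>c: "\<forall>h\<in>H. \<eta> h \<in> mat_carrier A n"
  shows "\<forall>J. ideal J A \<longrightarrow> (\<forall>M\<in>mat_carrier A n. CM A n H \<eta> J M \<longrightarrow> SM A n J M)"
proof -
  note LF = local_max_ideal_facts[OF loc]
  interpret A: cring A by (rule LF(1))
  define m where "m = max_ideal A"
  have mi: "ideal m A" unfolding m_def by (rule LF(2))
  have one_m: "\<one>\<^bsub>A\<^esub> \<notin> m" unfolding m_def by (rule LF(5))
  define r1 where "r1 = {(X,Y). ideal X A \<and> ideal Y A \<and> Y \<subset> X}"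
  have w1: "wf r1" using wf_up[OF fl hom] unfolding r1_def .
  have w2: "wf {(X,Y). ideal X A \<and> ideal Y A \<and> X \<subset> Y}" using wf_down[OF fl hom] .
  define dl where "dl c p = (if fst p = snd p then c else \<zero>\<^bsub>A\<^esub>)" for c and p :: "nat \<times> nat"
  have dlc: "\<And>c p. c \<in> carrier A \<Longrightarrow> dl c p \<in> carrier A" unfolding dl_def by auto
  show ?thesis
  proof (intro allI)
    fix J0
    show "ideal J0 A \<longrightarrow> (\<forall>M\<in>mat_carrier A n. CM A n H \<eta> J0 M \<longrightarrow> SM A n J0 M)"
    proof (induct J0 rule: wf_induct[OF w1])
      case (1 J)
      show ?case
      proof (intro impI ballI)
        fix M assume J: "ideal J A" and M: "M \<in> mat_carrier A n" and cmJ: "CM A n H \<eta> J M"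
        note cM = mat_carrierD[OF M]
        show "SM A n J M"
        proof (cases "J = carrier A")
          case True
          show ?thesis unfolding SM_def True using cM by (intro bexI[of _ "\<zero>\<^bsub>A\<^esub>"]) auto
        next
          case Jnc: False
          show ?thesis
          proof (cases "J = m")
            case True
            then show ?thesis using base_m[OF loc AC irr \<eta>c M] cmJ unfolding m_def by simp
          next
            case Jnm: False
            have Jsub: "J \<subset> carrier A" using ideal.Icarr[OF J] Jnc by auto
            have "carrier A \<in> {X. ideal X A \<and> J \<subset> X}" using A.oneideal Jsub by simp
            then obtain I where I: "I \<in> {X. ideal X A \<and> J \<subset> X}"
              and Imin0: "\<And>Y. (Y, I) \<in> {(X,Y). ideal X A \<and> ideal Y A \<and> X \<subset> Y} \<Longrightarrow> Y \<notin> {X. ideal X A \<and> J \<subset> X}"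
              by (rule wfE_min[OF w2]) blast
            have Iid: "ideal I A" and JI: "J \<subset> I" using I by auto
            have Imin: "False" if "ideal Y A" "Y \<subset> I" "J \<subset> Y" for Y using Imin0[of Y] that Iid by auto
            obtain a where a: "a \<in> I" "a \<notin> J" using JI by auto
            have ac: "a \<in> carrier A" using ideal.Icarr[OF Iid a(1)] .
            note Jc = ideal.Icarr[OF J]
            note mc = ideal.Icarr[OF mi]
            define J2 where "J2 = {x. \<exists>j\<in>J. \<exists>y\<in>carrier A. x = j \<oplus>\<^bsub>A\<^esub> a \<otimes>\<^bsub>A\<^esub> y}"
            have J2id: "ideal J2 A" unfolding J2_def by (rule A.ideal_plus_mult[OF J A.oneideal ac])
            have J2I: "J2 = I"
            proof (rule ccontr)
              assume ne: "J2 \<noteq> I"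
              have "J2 \<subseteq> I" unfolding J2_def
                using ideal.I_r_closed[OF Iid a(1)] ideal.Icarr[OF Iid] JI A.ideal_add[OF Iid] by blast
              moreover have "J \<subseteq> J2" unfolding J2_def
              proof
                fix j assume "j \<in> J"
                then have "j = j \<oplus>\<^bsub>A\<^esub> a \<otimes>\<^bsub>A\<^esub> \<zero>\<^bsub>A\<^esub>" using Jc ac by simp
                then show "j \<in> {x. \<exists>j\<in>J. \<exists>y\<in>carrier A. x = j \<oplus>\<^bsub>A\<^esub> a \<otimes>\<^bsub>A\<^esub> y}" using \<open>j \<in> J\<close> by blast
              qed
              moreover have "a \<in> J2" unfolding J2_def
              proof -
                have "a = \<zero>\<^bsub>A\<^esub> \<oplus>\<^bsub>A\<^esub> a \<otimes>\<^bsub>A\<^esub> \<one>\<^bsub>A\<^esub>" using ac by simp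
                moreover have "\<zero>\<^bsub>A\<^esub> \<in> J" using additive_subgroup.zero_closed[OF ideal.axioms(1)[OF J]] .
                ultimately show "a \<in> {x. \<exists>j\<in>J. \<exists>y\<in>carrier A. x = j \<oplus>\<^bsub>A\<^esub> a \<otimes>\<^bsub>A\<^esub> y}" by blast
              qed
              ultimately show False using Imin[OF J2id] ne a(2) by blast
            qed
            have am: "a \<otimes>\<^bsub>A\<^esub> y \<in> J" if y: "y \<in> m" for y
            proof (rule ccontr)
              assume ay: "a \<otimes>\<^bsub>A\<^esub> y \<notin> J"
              define J1 where "J1 = {x. \<exists>j\<in>J. \<exists>y\<in>m. x = j \<oplus>\<^bsub>A\<^esub> a \<otimes>\<^bsub>A\<^esub> y}"
              have J1id: "ideal J1 A" unfolding J1_def by (rule A.ideal_plus_mult[OF J mi ac])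
              have "J1 \<subseteq> I" unfolding J1_def
                using ideal.I_r_closed[OF Iid a(1)] mc JI A.ideal_add[OF Iid] by blast
              moreover have "J \<subset> J1"
              proof -
                have "J \<subseteq> J1" unfolding J1_def
                proof
                  fix j assume "j \<in> J"
                  then have "j = j \<oplus>\<^bsub>A\<^esub> a \<otimes>\<^bsub>A\<^esub> \<zero>\<^bsub>A\<^esub>" using Jc ac by simp
                  then show "j \<in> {x. \<exists>j\<in>J. \<exists>y\<in>m. x = j \<oplus>\<^bsub>A\<^esub> a \<otimes>\<^bsub>A\<^esub> y}"
                    using \<open>j \<in> J\<close> additive_subgroup.zero_closed[OF ideal.axioms(1)[OF mi]] by blast
                qed
                moreover have "a \<otimes>\<^bsub>A\<^esub> y \<in> J1" unfolding J1_def
                proof -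
                  have "a \<otimes>\<^bsub>A\<^esub> y = \<zero>\<^bsub>A\<^esub> \<oplus>\<^bsub>A\<^esub> a \<otimes>\<^bsub>A\<^esub> y" using ac mc y by simp
                  moreover have "\<zero>\<^bsub>A\<^esub> \<in> J" using additive_subgroup.zero_closed[OF ideal.axioms(1)[OF J]] .
                  ultimately show "a \<otimes>\<^bsub>A\<^esub> y \<in> {x. \<exists>j\<in>J. \<exists>y\<in>m. x = j \<oplus>\<^bsub>A\<^esub> a \<otimes>\<^bsub>A\<^esub> y}" using y by blast
                qed
                ultimately show ?thesis using ay by blast
              qed
              ultimately have "J1 = I" using Imin[OF J1id] by blast
              then have "a \<in> J1" using a(1) by simp
              then obtain j y' where jy: "j \<in> J" "y' \<in> m" "a = j \<oplus>\<^bsub>A\<^esub> a \<otimes>\<^bsub>A\<^esub> y'" unfolding J1_def by blast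
              have jc: "j \<in> carrier A" and y'c: "y' \<in> carrier A" using Jc mc jy by auto
              have "a \<otimes>\<^bsub>A\<^esub> (\<one>\<^bsub>A\<^esub> \<ominus>\<^bsub>A\<^esub> y') = a \<ominus>\<^bsub>A\<^esub> a \<otimes>\<^bsub>A\<^esub> y'"
                using ac y'c by algebra
              also have "\<dots> = (j \<oplus>\<^bsub>A\<^esub> a \<otimes>\<^bsub>A\<^esub> y') \<ominus>\<^bsub>A\<^esub> a \<otimes>\<^bsub>A\<^esub> y'"
                using arg_cong[OF jy(3), of "\<lambda>t. t \<ominus>\<^bsub>A\<^esub> a \<otimes>\<^bsub>A\<^esub> y'"] .
              also have "\<dots> = j" using jc ac y'c by algebra
              finally have e: "a \<otimes>\<^bsub>A\<^esub> (\<one>\<^bsub>A\<^esub> \<ominus>\<^bsub>A\<^esub> y') = j" .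
              have "\<one>\<^bsub>A\<^esub> \<ominus>\<^bsub>A\<^esub> y' \<notin> m"
              proof
                assume "\<one>\<^bsub>A\<^esub> \<ominus>\<^bsub>A\<^esub> y' \<in> m"
                then have "(\<one>\<^bsub>A\<^esub> \<ominus>\<^bsub>A\<^esub> y') \<oplus>\<^bsub>A\<^esub> y' \<in> m" using A.ideal_add[OF mi] jy(2) by blast
                moreover have "(\<one>\<^bsub>A\<^esub> \<ominus>\<^bsub>A\<^esub> y') \<oplus>\<^bsub>A\<^esub> y' = \<one>\<^bsub>A\<^esub>" using y'c by algebra
                ultimately show False using one_m by simp
              qed
              then have u: "\<one>\<^bsub>A\<^esub> \<ominus>\<^bsub>A\<^esub> y' \<in> Units A" using y'c unfolding m_def max_ideal_def by auto
              have "a = (a \<otimes>\<^bsub>A\<^esub> (\<one>\<^bsub>A\<^esub> \<ominus>\<^bsub>A\<^esub> y')) \<otimes>\<^bsub>A\<^esub> inv\<^bsub>A\<^esub> (\<one>\<^bsub>A\<^esub> \<ominus>\<^bsub>A\<^esub> y')"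
                using ac u A.Units_closed[OF u] by (simp add: A.m_assoc)
              also have "\<dots> \<in> J" unfolding e using ideal.I_r_closed[OF J jy(1)] u by simp
              finally show False using a(2) by simp
            qed
            have cancel: "z \<in> m" if "z \<in> carrier A" "a \<otimes>\<^bsub>A\<^esub> z \<in> J" for z
            proof (rule ccontr)
              assume "z \<notin> m"
              then have u: "z \<in> Units A" using that unfolding m_def max_ideal_def by auto
              have "a = (a \<otimes>\<^bsub>A\<^esub> z) \<otimes>\<^bsub>A\<^esub> inv\<^bsub>A\<^esub> z" using ac u A.Units_closed[OF u] by (simp add: A.m_assoc)
              also have "\<dots> \<in> J" using ideal.I_r_closed[OF J that(2)] u by simp
              finally show False using a(2) by simp
            qed
            have QI: "\<forall>M\<in>mat_carrier A n. CM A n H \<eta> I M \<longrightarrow> SM A n I M"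
              using 1[rule_format, of I] Iid J JI unfolding r1_def by auto
            have "CM A n H \<eta> I M" using cmJ JI unfolding CM_def by blast
            then obtain c where c: "c \<in> carrier A" "\<forall>i<n. \<forall>j<n. M (i,j) \<ominus>\<^bsub>A\<^esub> (if i = j then c else \<zero>\<^bsub>A\<^esub>) \<in> I"
              using QI M unfolding SM_def by blast
            have "\<forall>p\<in>{..<n}\<times>{..<n}. \<exists>q. fst q \<in> J \<and> snd q \<in> carrier A \<and> M p \<ominus>\<^bsub>A\<^esub> dl c p = fst q \<oplus>\<^bsub>A\<^esub> a \<otimes>\<^bsub>A\<^esub> snd q"
            proof
              fix p assume "p \<in> {..<n}\<times>{..<n}"
              then obtain i j where p: "p = (i,j)" "i < n" "j < n" by auto
              have "M p \<ominus>\<^bsub>A\<^esub> dl c p \<in> J2" using c(2) p J2I unfolding dl_def by auto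
              then show "\<exists>q. fst q \<in> J \<and> snd q \<in> carrier A \<and> M p \<ominus>\<^bsub>A\<^esub> dl c p = fst q \<oplus>\<^bsub>A\<^esub> a \<otimes>\<^bsub>A\<^esub> snd q"
                unfolding J2_def by auto
            qed
            then obtain f where f: "\<forall>p\<in>{..<n}\<times>{..<n}. fst (f p) \<in> J \<and> snd (f p) \<in> carrier A \<and> M p \<ominus>\<^bsub>A\<^esub> dl c p = fst (f p) \<oplus>\<^bsub>A\<^esub> a \<otimes>\<^bsub>A\<^esub> snd (f p)"
              using bchoice[of "{..<n}\<times>{..<n}" "\<lambda>p q. fst q \<in> J \<and> snd q \<in> carrier A \<and> M p \<ominus>\<^bsub>A\<^esub> dl c p = fst q \<oplus>\<^bsub>A\<^esub> a \<otimes>\<^bsub>A\<^esub> snd q"] by blast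
            define Y where "Y = (\<lambda>p\<in>{..<n}\<times>{..<n}. fst (f p))"
            define Z where "Z = (\<lambda>p\<in>{..<n}\<times>{..<n}. snd (f p))"
            define X where "X = mat_smult A n c (mat_one A n)"
            have YJ: "\<forall>i<n. \<forall>j<n. Y (i,j) \<in> J" unfolding Y_def using f by auto
            have Ym: "Y \<in> mat_carrier A n" unfolding Y_def mat_carrier_def using f Jc by auto
            have Zm: "Z \<in> mat_carrier A n" unfolding Z_def mat_carrier_def using f by auto
            have Xm: "X \<in> mat_carrier A n" unfolding X_def using c(1) by (intro A.mat_smult_closed A.mat_one_closed)
            have Xe: "X (i,j) = dl c (i,j)" if "i < n" "j < n" for i j
              unfolding X_def dl_def using that c(1) by (simp add: mat_smult_entry mat_one_entry)
            have e: "\<forall>i<n. \<forall>j<n. M (i,j) = X (i,j) \<oplus>\<^bsub>A\<^esub> Y (i,j) \<oplus>\<^bsub>A\<^esub> a \<otimes>\<^bsub>A\<^esub> Z (i,j)"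
            proof (intro allI impI)
              fix i j assume ij: "i < n" "j < n"
              have fe: "M (i,j) \<ominus>\<^bsub>A\<^esub> dl c (i,j) = Y (i,j) \<oplus>\<^bsub>A\<^esub> a \<otimes>\<^bsub>A\<^esub> Z (i,j)"
                using f ij unfolding Y_def Z_def by auto
              have "M (i,j) = dl c (i,j) \<oplus>\<^bsub>A\<^esub> (M (i,j) \<ominus>\<^bsub>A\<^esub> dl c (i,j))"
                using cM[OF ij] dlc[OF c(1)] by algebra
              also have "\<dots> = X (i,j) \<oplus>\<^bsub>A\<^esub> (Y (i,j) \<oplus>\<^bsub>A\<^esub> a \<otimes>\<^bsub>A\<^esub> Z (i,j))" unfolding fe Xe[OF ij] ..
              also have "\<dots> = X (i,j) \<oplus>\<^bsub>A\<^esub> Y (i,j) \<oplus>\<^bsub>A\<^esub> a \<otimes>\<^bsub>A\<^esub> Z (i,j)"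
                using mat_carrierD[OF Xm ij] mat_carrierD[OF Ym ij] mat_carrierD[OF Zm ij] ac by algebra
              finally show "M (i,j) = X (i,j) \<oplus>\<^bsub>A\<^esub> Y (i,j) \<oplus>\<^bsub>A\<^esub> a \<otimes>\<^bsub>A\<^esub> Z (i,j)" .
            qed
            have cmZ: "CM A n H \<eta> m Z" unfolding CM_def
            proof (intro ballI allI impI)
              fix h i j assume h: "h \<in> H" and ij: "i < n" "j < n"
              have eh: "\<eta> h \<in> mat_carrier A n" using \<eta>c h by auto
              define x where "x = c \<otimes>\<^bsub>A\<^esub> \<eta> h (i,j)"
              define y1 where "y1 = mat_mul A n Y (\<eta> h) (i,j)"
              define y2 where "y2 = mat_mul A n (\<eta> h) Y (i,j)"
              define z1 where "z1 = mat_mul A n Z (\<eta> h) (i,j)"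
              define z2 where "z2 = mat_mul A n (\<eta> h) Z (i,j)"
              have x1: "mat_mul A n X (\<eta> h) (i,j) = x" unfolding X_def x_def
                using A.scal_mul[OF c(1) eh] ij by (simp add: mat_smult_entry)
              have x2: "mat_mul A n (\<eta> h) X (i,j) = x" unfolding X_def x_def
                using A.scal_mul[OF c(1) eh] ij by (simp add: mat_smult_entry)
              have sL: "mat_mul A n M (\<eta> h) (i,j) = x \<oplus>\<^bsub>A\<^esub> y1 \<oplus>\<^bsub>A\<^esub> a \<otimes>\<^bsub>A\<^esub> z1"
                using A.mat_mul_split_left[OF M Xm Ym Zm eh ac e ij] x1 unfolding y1_def z1_def by simp
              have sR: "mat_mul A n (\<eta> h) M (i,j) = x \<oplus>\<^bsub>A\<^esub> y2 \<oplus>\<^bsub>A\<^esub> a \<otimes>\<^bsub>A\<^esub> z2"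
                using A.mat_mul_split_right[OF M Xm Ym Zm eh ac e ij] x2 unfolding y2_def z2_def by simp
              have yJ: "y1 \<in> J" "y2 \<in> J" unfolding y1_def y2_def using A.mat_mul_ideal_left[OF J YJ eh ij] by auto
              have cc: "x \<in> carrier A" "y1 \<in> carrier A" "y2 \<in> carrier A" "z1 \<in> carrier A" "z2 \<in> carrier A"
                unfolding x_def y1_def y2_def z1_def z2_def
                using c(1) mat_carrierD[OF eh ij] mat_carrierD[OF A.mat_mul_closed[OF Ym eh] ij]
                  mat_carrierD[OF A.mat_mul_closed[OF eh Ym] ij] mat_carrierD[OF A.mat_mul_closed[OF Zm eh] ij]
                  mat_carrierD[OF A.mat_mul_closed[OF eh Zm] ij] by auto
              have D: "(x \<oplus>\<^bsub>A\<^esub> y1 \<oplus>\<^bsub>A\<^esub> a \<otimes>\<^bsub>A\<^esub> z1) \<ominus>\<^bsub>A\<^esub> (x \<oplus>\<^bsub>A\<^esub> y2 \<oplus>\<^bsub>A\<^esub> a \<otimes>\<^bsub>A\<^esub> z2) \<in> J"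
              proof -
                have "mat_mul A n M (\<eta> h) (i,j) \<ominus>\<^bsub>A\<^esub> mat_mul A n (\<eta> h) M (i,j) \<in> J"
                  using cmJ h ij unfolding CM_def by blast
                then show ?thesis unfolding sL sR .
              qed
              have "a \<otimes>\<^bsub>A\<^esub> (z1 \<ominus>\<^bsub>A\<^esub> z2) = ((x \<oplus>\<^bsub>A\<^esub> y1 \<oplus>\<^bsub>A\<^esub> a \<otimes>\<^bsub>A\<^esub> z1) \<ominus>\<^bsub>A\<^esub> (x \<oplus>\<^bsub>A\<^esub> y2 \<oplus>\<^bsub>A\<^esub> a \<otimes>\<^bsub>A\<^esub> z2)) \<ominus>\<^bsub>A\<^esub> (y1 \<ominus>\<^bsub>A\<^esub> y2)"
                using cc ac by algebra
              also have "\<dots> \<in> J" using A.ideal_minus[OF J D A.ideal_minus[OF J yJ]] .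
              finally have "a \<otimes>\<^bsub>A\<^esub> (z1 \<ominus>\<^bsub>A\<^esub> z2) \<in> J" .
              then have "z1 \<ominus>\<^bsub>A\<^esub> z2 \<in> m" using cancel cc by simp
              then show "mat_mul A n Z (\<eta> h) (i,j) \<ominus>\<^bsub>A\<^esub> mat_mul A n (\<eta> h) Z (i,j) \<in> m"
                unfolding z1_def z2_def .
            qed
            obtain \<mu> where \<mu>: "\<mu> \<in> carrier A" "\<forall>i<n. \<forall>j<n. Z (i,j) \<ominus>\<^bsub>A\<^esub> (if i = j then \<mu> else \<zero>\<^bsub>A\<^esub>) \<in> m"
              using base_m[OF loc AC irr \<eta>c Zm cmZ[unfolded m_def]] unfolding SM_def m_def by blast
            show ?thesis unfolding SM_def
            proof (intro bexI[of _ "c \<oplus>\<^bsub>A\<^esub> a \<otimes>\<^bsub>A\<^esub> \<mu>"] allI impI)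
              show "c \<oplus>\<^bsub>A\<^esub> a \<otimes>\<^bsub>A\<^esub> \<mu> \<in> carrier A" using c(1) ac \<mu>(1) by simp
              fix i j assume ij: "i < n" "j < n"
              have cc: "M (i,j) \<in> carrier A" "X (i,j) \<in> carrier A" "Y (i,j) \<in> carrier A" "Z (i,j) \<in> carrier A"
                using cM[OF ij] mat_carrierD[OF Xm ij] mat_carrierD[OF Ym ij] mat_carrierD[OF Zm ij] by auto
              have "M (i,j) \<ominus>\<^bsub>A\<^esub> (if i = j then c \<oplus>\<^bsub>A\<^esub> a \<otimes>\<^bsub>A\<^esub> \<mu> else \<zero>\<^bsub>A\<^esub>)
                  = Y (i,j) \<oplus>\<^bsub>A\<^esub> a \<otimes>\<^bsub>A\<^esub> (Z (i,j) \<ominus>\<^bsub>A\<^esub> (if i = j then \<mu> else \<zero>\<^bsub>A\<^esub>))"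
              proof (cases "i = j")
                case True
                have "M (i,j) = c \<oplus>\<^bsub>A\<^esub> Y (i,j) \<oplus>\<^bsub>A\<^esub> a \<otimes>\<^bsub>A\<^esub> Z (i,j)"
                  using e ij Xe[OF ij] True unfolding dl_def by simp
                moreover have "(c \<oplus>\<^bsub>A\<^esub> Y (i,j) \<oplus>\<^bsub>A\<^esub> a \<otimes>\<^bsub>A\<^esub> Z (i,j)) \<ominus>\<^bsub>A\<^esub> (c \<oplus>\<^bsub>A\<^esub> a \<otimes>\<^bsub>A\<^esub> \<mu>)
                   = Y (i,j) \<oplus>\<^bsub>A\<^esub> a \<otimes>\<^bsub>A\<^esub> (Z (i,j) \<ominus>\<^bsub>A\<^esub> \<mu>)"
                  using cc c(1) ac \<mu>(1) by algebra
                ultimately show ?thesis using True by simp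
              next
                case False
                have "M (i,j) = \<zero>\<^bsub>A\<^esub> \<oplus>\<^bsub>A\<^esub> Y (i,j) \<oplus>\<^bsub>A\<^esub> a \<otimes>\<^bsub>A\<^esub> Z (i,j)"
                  using e ij Xe[OF ij] False unfolding dl_def by simp
                moreover have "(\<zero>\<^bsub>A\<^esub> \<oplus>\<^bsub>A\<^esub> Y (i,j) \<oplus>\<^bsub>A\<^esub> a \<otimes>\<^bsub>A\<^esub> Z (i,j)) \<ominus>\<^bsub>A\<^esub> \<zero>\<^bsub>A\<^esub>
                   = Y (i,j) \<oplus>\<^bsub>A\<^esub> a \<otimes>\<^bsub>A\<^esub> (Z (i,j) \<ominus>\<^bsub>A\<^esub> \<zero>\<^bsub>A\<^esub>)"
                  using cc ac by algebra
                ultimately show ?thesis using False by simp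
              qed
              also have "\<dots> \<in> J" using A.ideal_add[OF J YJ[rule_format, OF ij] am[OF \<mu>(2)[rule_format, OF ij]]] .
              finally show "M (i,j) \<ominus>\<^bsub>A\<^esub> (if i = j then c \<oplus>\<^bsub>A\<^esub> a \<otimes>\<^bsub>A\<^esub> \<mu> else \<zero>\<^bsub>A\<^esub>) \<in> J" .
            qed
          qed
        qed
      qed
    qed
  qed
qed

lemma scalar_commutant:
  fixes A :: "'a ring" and W :: "'w ring"
  assumes loc: "local_ring A" and AC: "alg_closed_sum (A Quot max_ideal A)"
    and fl: "W_finite_length W A \<phi>" and hom: "\<phi> \<in> ring_hom W A"
    and irr: "residually_irreducible A n H \<eta>" and \<eta>c: "\<forall>h\<in>H. \<eta> h \<in> mat_carrier A n"
    and M: "M \<in> mat_carrier A n" and comm: "\<forall>h\<in>H. mat_mul A n M (\<eta> h) = mat_mul A n (\<eta> h) M"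
  shows "\<exists>c\<in>carrier A. M = mat_smult A n c (mat_one A n)"
proof -
  note LF = local_max_ideal_facts[OF loc]
  interpret A: cring A by (rule LF(1))
  have "CM A n H \<eta> {\<zero>\<^bsub>A\<^esub>} M" unfolding CM_def
  proof (intro ballI allI impI)
    fix h i j assume "h \<in> H" "i < n" "j < n"
    moreover have "mat_mul A n M (\<eta> h) \<in> mat_carrier A n" using \<eta>c M \<open>h \<in> H\<close> by (intro A.mat_mul_closed) auto
    ultimately have "mat_mul A n M (\<eta> h) (i, j) \<in> carrier A" using mat_carrierD by blast
    then show "mat_mul A n M (\<eta> h) (i, j) \<ominus>\<^bsub>A\<^esub> mat_mul A n (\<eta> h) M (i, j) \<in> {\<zero>\<^bsub>A\<^esub>}"
      using comm \<open>h \<in> H\<close> by (simp add: A.r_neg A.minus_eq)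
  qed
  then obtain c where c: "c \<in> carrier A" "\<forall>i<n. \<forall>j<n. M (i,j) \<ominus>\<^bsub>A\<^esub> (if i = j then c else \<zero>\<^bsub>A\<^esub>) \<in> {\<zero>\<^bsub>A\<^esub>}"
    using schur_A_all[OF loc AC fl hom irr \<eta>c] A.zeroideal M unfolding SM_def by blast
  show ?thesis
  proof (intro bexI[OF _ c(1)] mat_eqI[OF M A.mat_smult_closed[OF c(1) A.mat_one_closed]])
    fix i j assume ij: "i < n" "j < n"
    have mc: "M (i,j) \<in> carrier A" using mat_carrierD[OF M ij] .
    have d: "(if i = j then c else \<zero>\<^bsub>A\<^esub>) \<in> carrier A" using c(1) by simp
    have z: "M (i,j) \<ominus>\<^bsub>A\<^esub> (if i = j then c else \<zero>\<^bsub>A\<^esub>) = \<zero>\<^bsub>A\<^esub>" using c(2) ij by blast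
    have "M (i,j) = (M (i,j) \<ominus>\<^bsub>A\<^esub> (if i = j then c else \<zero>\<^bsub>A\<^esub>)) \<oplus>\<^bsub>A\<^esub> (if i = j then c else \<zero>\<^bsub>A\<^esub>)"
      using mc d by algebra
    also have "\<dots> = (if i = j then c else \<zero>\<^bsub>A\<^esub>)" unfolding z using d by simp
    finally show "M (i,j) = mat_smult A n c (mat_one A n) (i,j)" using ij c(1) by (simp add: entries)
  qed
qed

lemma rep_facts:
  fixes A :: "'a ring"
  assumes "smooth_rep J T A n H \<Lambda>" "cring A"
  shows "\<forall>g\<in>H. \<Lambda> g \<in> mat_carrier A n"
    "\<forall>g\<in>H. \<exists>N\<in>mat_carrier A n. mat_mul A n (\<Lambda> g) N = mat_one A n \<and> mat_mul A n N (\<Lambda> g) = mat_one A n"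
    "\<forall>g\<in>H. \<forall>h\<in>H. \<Lambda> (g \<otimes>\<^bsub>J\<^esub> h) = mat_mul A n (\<Lambda> g) (\<Lambda> h)"
    "\<forall>v\<in>vec_carrier A n. openin (subtopology T H) {g\<in>H. mat_vec A n (\<Lambda> g) v = v}"
proof -
  have a0: "(\<forall>g\<in>H. \<Lambda> g \<in> GL A n) \<and> (\<forall>g\<in>H. \<forall>h\<in>H. \<Lambda> (g \<otimes>\<^bsub>J\<^esub> h) = mat_mul A n (\<Lambda> g) (\<Lambda> h)) \<and>
    (\<forall>v\<in>vec_carrier A n. openin (subtopology T H) {g\<in>H. mat_vec A n (\<Lambda> g) v = v})"
    using assms(1) unfolding smooth_rep_def .
  note a = conjunct1[OF a0] conjunct1[OF conjunct2[OF a0]] conjunct2[OF conjunct2[OF a0]]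
  show "\<forall>g\<in>H. \<Lambda> g \<in> mat_carrier A n" using a(1) unfolding GL_def by simp
  show "\<forall>g\<in>H. \<exists>N\<in>mat_carrier A n. mat_mul A n (\<Lambda> g) N = mat_one A n \<and> mat_mul A n N (\<Lambda> g) = mat_one A n"
    using a(1) unfolding GL_def by simp
  show "\<forall>g\<in>H. \<forall>h\<in>H. \<Lambda> (g \<otimes>\<^bsub>J\<^esub> h) = mat_mul A n (\<Lambda> g) (\<Lambda> h)" by (rule a(2))
  show "\<forall>v\<in>vec_carrier A n. openin (subtopology T H) {g\<in>H. mat_vec A n (\<Lambda> g) v = v}" by (rule a(3))
qed

theorem mainTheorem8:
  fixes J :: "'g monoid" and T :: "'g topology" and J1 :: "'g set"
    and W :: "'w ring" and l :: nat and A :: "'a ring" and \<phi> :: "'w \<Rightarrow> 'a"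
    and n :: nat and \<eta> \<Lambda> \<Lambda>' :: "'g \<Rightarrow> nat \<times> nat \<Rightarrow> 'a"
  assumes "locally_profinite J T"
    and "J1 \<lhd> J" and "compactin T J1"
    and "witt_Fbar W l" and "fin_length_local_W_alg W A \<phi>"
    and "smooth_rep J T A n J1 \<eta>"
    and "residually_irreducible A n J1 \<eta>"
    and "smooth_rep J T A n (carrier J) \<Lambda>" and "\<forall>g\<in>J1. \<Lambda> g = \<eta> g"
    and "smooth_rep J T A n (carrier J) \<Lambda>'" and "\<forall>g\<in>J1. \<Lambda>' g = \<eta> g"
  shows "\<exists>\<chi>. smooth_char_quot J T A J1 \<chi> \<and>
           (\<exists>P\<in>GL A n. \<forall>g\<in>carrier J.
              mat_mul A n P (\<Lambda>' g) = mat_mul A n (mat_smult A n (\<chi> g) (\<Lambda> g)) P)"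
proof -
  have tg: "topological_group J T" using assms(1) unfolding locally_profinite_def by simp
  have grp: "group J" and top: "topspace T = carrier J"
    and cmul: "continuous_map (prod_topology T T) T (\<lambda>(x, y). x \<otimes>\<^bsub>J\<^esub> y)"
    using tg unfolding topological_group_def by auto
  interpret G: group J by (rule grp)
  interpret N: normal J1 J by (rule assms(2))
  have J1sub: "J1 \<subseteq> carrier J" using N.subset .
  have loc: "local_ring A" and hom: "\<phi> \<in> ring_hom W A" and flen: "W_finite_length W A \<phi>"
    using assms(5) unfolding fin_length_local_W_alg_def by auto
  note LF = local_max_ideal_facts[OF loc]
  interpret A: cring A by (rule LF(1))
  have AC: "alg_closed_sum (A Quot max_ideal A)" by (rule quot_alg_closed[OF assms(4,5)])
  have npos: "n > 0" using assms(7) unfolding residually_irreducible_def irreducible_rep_def by simp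
  note RE = rep_facts[OF assms(6) LF(1)]
  note RL = rep_facts[OF assms(8) LF(1)]
  note RL' = rep_facts[OF assms(10) LF(1)]
  define Ni where "Ni g = (SOME N. N \<in> mat_carrier A n \<and> mat_mul A n (\<Lambda> g) N = mat_one A n \<and> mat_mul A n N (\<Lambda> g) = mat_one A n)" for g
  have Ni: "Ni g \<in> mat_carrier A n \<and> mat_mul A n (\<Lambda> g) (Ni g) = mat_one A n \<and> mat_mul A n (Ni g) (\<Lambda> g) = mat_one A n"
    if "g \<in> carrier J" for g
  proof -
    from bspec[OF RL(2) that] obtain N where N: "N \<in> mat_carrier A n"
      "mat_mul A n (\<Lambda> g) N = mat_one A n \<and> mat_mul A n N (\<Lambda> g) = mat_one A n" ..
    have "\<exists>N. N \<in> mat_carrier A n \<and> mat_mul A n (\<Lambda> g) N = mat_one A n \<and> mat_mul A n N (\<Lambda> g) = mat_one A n"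
      by (rule exI[of _ N]) (use N in simp)
    from someI_ex[OF this] show ?thesis unfolding Ni_def .
  qed
  have Lc: "\<And>g. g \<in> carrier J \<Longrightarrow> \<Lambda> g \<in> mat_carrier A n" by (rule bspec[OF RL(1)])
  have L'c: "\<And>g. g \<in> carrier J \<Longrightarrow> \<Lambda>' g \<in> mat_carrier A n" by (rule bspec[OF RL'(1)])
  have \<eta>c: "\<forall>h\<in>J1. \<eta> h \<in> mat_carrier A n" using RE(1) .
  note assoc = A.mat_mul_assoc
  note mcl = A.mat_mul_closed
  have key: "\<exists>c\<in>carrier A. \<Lambda>' g = mat_smult A n c (\<Lambda> g)" if g: "g \<in> carrier J" for g
  proof -
    define Lg where "Lg = \<Lambda> g"
    define L'g where "L'g = \<Lambda>' g"
    define Ng where "Ng = Ni g"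
    have c1: "Lg \<in> mat_carrier A n" "L'g \<in> mat_carrier A n" "Ng \<in> mat_carrier A n"
      unfolding Lg_def L'g_def Ng_def using Lc L'c Ni g by auto
    have inv1: "mat_mul A n Lg Ng = mat_one A n" and inv2: "mat_mul A n Ng Lg = mat_one A n"
      unfolding Lg_def Ng_def using Ni g by auto
    define X where "X = mat_mul A n Ng L'g"
    have Xc: "X \<in> mat_carrier A n" unfolding X_def using c1 by (intro mcl)
    have comm: "\<forall>h\<in>J1. mat_mul A n X (\<eta> h) = mat_mul A n (\<eta> h) X"
    proof
      fix h assume h: "h \<in> J1"
      have hc: "h \<in> carrier J" using h J1sub by auto
      define k where "k = g \<otimes>\<^bsub>J\<^esub> h \<otimes>\<^bsub>J\<^esub> inv\<^bsub>J\<^esub> g"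
      have k: "k \<in> J1" unfolding k_def using N.inv_op_closed2[OF g h] .
      have kc: "k \<in> carrier J" using k J1sub by auto
      have ghk: "g \<otimes>\<^bsub>J\<^esub> h = k \<otimes>\<^bsub>J\<^esub> g" unfolding k_def using g hc by (simp add: G.m_assoc)
      define E where "E = \<eta> h"
      define Ek where "Ek = \<eta> k"
      have cE: "E \<in> mat_carrier A n" "Ek \<in> mat_carrier A n" unfolding E_def Ek_def using \<eta>c h k by auto
      have e1: "mat_mul A n L'g E = mat_mul A n Ek L'g"
      proof -
        have "mat_mul A n L'g E = \<Lambda>' (g \<otimes>\<^bsub>J\<^esub> h)" unfolding L'g_def E_def using RL'(3) g hc assms(11) h by simp
        also have "\<dots> = \<Lambda>' (k \<otimes>\<^bsub>J\<^esub> g)" unfolding ghk ..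
        also have "\<dots> = mat_mul A n Ek L'g" unfolding L'g_def Ek_def using RL'(3) g kc assms(11) k by simp
        finally show ?thesis .
      qed
      have e2: "mat_mul A n Lg E = mat_mul A n Ek Lg"
      proof -
        have "mat_mul A n Lg E = \<Lambda> (g \<otimes>\<^bsub>J\<^esub> h)" unfolding Lg_def E_def using RL(3) g hc assms(9) h by simp
        also have "\<dots> = \<Lambda> (k \<otimes>\<^bsub>J\<^esub> g)" unfolding ghk ..
        also have "\<dots> = mat_mul A n Ek Lg" unfolding Lg_def Ek_def using RL(3) g kc assms(9) k by simp
        finally show ?thesis .
      qed
      have nek: "mat_mul A n Ng Ek = mat_mul A n E Ng"
      proof -
        have "mat_mul A n Ng Ek = mat_mul A n Ng (mat_mul A n Ek (mat_mul A n Lg Ng))"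
          unfolding inv1 using A.mat_one_right[OF cE(2)] by simp
        also have "\<dots> = mat_mul A n (mat_mul A n Ng (mat_mul A n Ek Lg)) Ng"
          using c1 cE by (simp add: assoc mcl)
        also have "\<dots> = mat_mul A n (mat_mul A n (mat_mul A n Ng Lg) E) Ng"
          unfolding e2[symmetric] using c1 cE by (simp add: assoc mcl)
        also have "\<dots> = mat_mul A n E Ng" unfolding inv2 using A.mat_one_left[OF cE(1)] by simp
        finally show ?thesis .
      qed
      have "mat_mul A n X E = mat_mul A n Ng (mat_mul A n L'g E)" unfolding X_def using c1 cE by (simp add: assoc)
      also have "\<dots> = mat_mul A n (mat_mul A n Ng Ek) L'g" unfolding e1 using c1 cE by (simp add: assoc)
      also have "\<dots> = mat_mul A n E X" unfolding nek X_def using c1 cE by (simp add: assoc)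
      finally show "mat_mul A n X (\<eta> h) = mat_mul A n (\<eta> h) X" unfolding E_def .
    qed
    from scalar_commutant[OF loc AC flen hom assms(7) \<eta>c Xc comm]
    obtain c where c: "c \<in> carrier A" "X = mat_smult A n c (mat_one A n)" ..
    have "L'g = mat_mul A n (mat_mul A n Lg Ng) L'g" unfolding inv1 using A.mat_one_left[OF c1(2)] by simp
    also have "\<dots> = mat_mul A n Lg X" unfolding X_def using c1 by (simp add: assoc)
    also have "\<dots> = mat_smult A n c Lg" unfolding c(2) using A.scal_mul(2)[OF c(1) c1(1)] .
    finally have "\<Lambda>' g = mat_smult A n c (\<Lambda> g)" unfolding L'g_def Lg_def .
    then show ?thesis by (rule bexI[OF _ c(1)])
  qed
  have uniq: "c = d" if g: "g \<in> carrier J" and cd: "c \<in> carrier A" "d \<in> carrier A"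
    and e: "mat_smult A n c (\<Lambda> g) = mat_smult A n d (\<Lambda> g)" for g c d
  proof -
    have Nc: "Ni g \<in> mat_carrier A n" and inv: "mat_mul A n (\<Lambda> g) (Ni g) = mat_one A n" using Ni g by auto
    have "mat_smult A n c (mat_one A n) = mat_smult A n d (mat_one A n)"
      using A.mat_smult_mul_left[OF cd(1) Lc[OF g] Nc] A.mat_smult_mul_left[OF cd(2) Lc[OF g] Nc] e inv by simp
    then have "mat_smult A n c (mat_one A n) (0,0) = mat_smult A n d (mat_one A n) (0,0)" by simp
    then show ?thesis using npos cd by (simp add: entries)
  qed
  define \<chi> where "\<chi> g = (SOME c. c \<in> carrier A \<and> \<Lambda>' g = mat_smult A n c (\<Lambda> g))" for g
  have \<chi>: "\<chi> g \<in> carrier A \<and> \<Lambda>' g = mat_smult A n (\<chi> g) (\<Lambda> g)" if "g \<in> carrier J" for g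
  proof -
    from key[OF that] obtain c where c: "c \<in> carrier A" "\<Lambda>' g = mat_smult A n c (\<Lambda> g)" ..
    have "\<exists>c. c \<in> carrier A \<and> \<Lambda>' g = mat_smult A n c (\<Lambda> g)" by (rule exI[of _ c]) (use c in simp)
    from someI_ex[OF this] show ?thesis unfolding \<chi>_def .
  qed
  have \<chi>eq: "\<chi> g = c" if g: "g \<in> carrier J" and c: "c \<in> carrier A" and e: "\<Lambda>' g = mat_smult A n c (\<Lambda> g)" for g c
  proof -
    have cg: "\<chi> g \<in> carrier A" using \<chi>[OF g] by simp
    have "mat_smult A n (\<chi> g) (\<Lambda> g) = mat_smult A n c (\<Lambda> g)" using \<chi>[OF g] e by simp
    then show ?thesis using uniq[OF g cg c] by simp
  qed
  have \<chi>mult: "\<chi> (g \<otimes>\<^bsub>J\<^esub> h) = \<chi> g \<otimes>\<^bsub>A\<^esub> \<chi> h" if g: "g \<in> carrier J" and h: "h \<in> carrier J" for g h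
  proof (rule \<chi>eq)
    show "g \<otimes>\<^bsub>J\<^esub> h \<in> carrier J" using g h by simp
    show "\<chi> g \<otimes>\<^bsub>A\<^esub> \<chi> h \<in> carrier A" using \<chi> g h by simp
    have cg: "\<chi> g \<in> carrier A" and ch: "\<chi> h \<in> carrier A" using \<chi> g h by auto
    have "\<Lambda>' (g \<otimes>\<^bsub>J\<^esub> h) = mat_mul A n (\<Lambda>' g) (\<Lambda>' h)" using RL'(3) g h by simp
    also have "\<dots> = mat_mul A n (mat_smult A n (\<chi> g) (\<Lambda> g)) (mat_smult A n (\<chi> h) (\<Lambda> h))" using \<chi> g h by simp
    also have "\<dots> = mat_smult A n (\<chi> g \<otimes>\<^bsub>A\<^esub> \<chi> h) (mat_mul A n (\<Lambda> g) (\<Lambda> h))"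
      using cg ch Lc[OF g] Lc[OF h]
      by (simp add: A.mat_smult_mul_left A.mat_smult_mul_right A.mat_smult_closed A.mat_smult_smult A.mat_mul_closed A.m_comm)
    also have "\<dots> = mat_smult A n (\<chi> g \<otimes>\<^bsub>A\<^esub> \<chi> h) (\<Lambda> (g \<otimes>\<^bsub>J\<^esub> h))" using RL(3) g h by simp
    finally show "\<Lambda>' (g \<otimes>\<^bsub>J\<^esub> h) = mat_smult A n (\<chi> g \<otimes>\<^bsub>A\<^esub> \<chi> h) (\<Lambda> (g \<otimes>\<^bsub>J\<^esub> h))" .
  qed
  have \<chi>J1: "\<chi> g = \<one>\<^bsub>A\<^esub>" if g: "g \<in> J1" for g
  proof (rule \<chi>eq)
    show gc: "g \<in> carrier J" using g J1sub by auto
    show "\<one>\<^bsub>A\<^esub> \<in> carrier A" by simp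
    show "\<Lambda>' g = mat_smult A n \<one>\<^bsub>A\<^esub> (\<Lambda> g)" using assms(9,11) g A.mat_smult_one[OF Lc[OF gc]] by simp
  qed
  have \<chi>unit: "\<chi> g \<in> Units A" if g: "g \<in> carrier J" for g
  proof -
    from bspec[OF RL'(2) g] obtain N' where N'0: "N' \<in> mat_carrier A n"
      "mat_mul A n (\<Lambda>' g) N' = mat_one A n \<and> mat_mul A n N' (\<Lambda>' g) = mat_one A n" ..
    then have N': "N' \<in> mat_carrier A n" "mat_mul A n (\<Lambda>' g) N' = mat_one A n" by simp_all
    have cg: "\<chi> g \<in> carrier A" using \<chi> g by auto
    have "mat_smult A n (\<chi> g) (mat_mul A n (\<Lambda> g) N') = mat_one A n"
      using N' \<chi>[OF g] A.mat_smult_mul_left[OF cg Lc[OF g] N'(1)] by simp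
    then have "mat_smult A n (\<chi> g) (mat_mul A n (\<Lambda> g) N') (0,0) = mat_one A n (0,0)" by simp
    then have e: "\<chi> g \<otimes>\<^bsub>A\<^esub> mat_mul A n (\<Lambda> g) N' (0,0) = \<one>\<^bsub>A\<^esub>" using npos by (simp add: entries)
    have xc: "mat_mul A n (\<Lambda> g) N' (0,0) \<in> carrier A" using mat_carrierD[OF mcl[OF Lc[OF g] N'(1)]] npos by blast
    have "mat_mul A n (\<Lambda> g) N' (0,0) \<otimes>\<^bsub>A\<^esub> \<chi> g = \<one>\<^bsub>A\<^esub>" using e xc cg by (simp add: A.m_comm)
    then have "cg' \<in> carrier A \<and> (\<exists>x\<in>carrier A. x \<otimes>\<^bsub>A\<^esub> cg' = \<one>\<^bsub>A\<^esub> \<and> cg' \<otimes>\<^bsub>A\<^esub> x = \<one>\<^bsub>A\<^esub>)" if "cg' = \<chi> g" for cg'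
      using e xc cg that by (intro conjI bexI[of _ "mat_mul A n (\<Lambda> g) N' (0,0)"]) simp_all
    then show ?thesis unfolding Units_def by simp
  qed
  have one_rep: "\<Lambda> \<one>\<^bsub>J\<^esub> = mat_one A n" "\<Lambda>' \<one>\<^bsub>J\<^esub> = mat_one A n"
  proof -
    have gen: "R \<one>\<^bsub>J\<^esub> = mat_one A n"
      if R1: "\<forall>g\<in>carrier J. R g \<in> mat_carrier A n"
        and R2: "\<forall>g\<in>carrier J. \<exists>N\<in>mat_carrier A n. mat_mul A n (R g) N = mat_one A n \<and> mat_mul A n N (R g) = mat_one A n"
        and R3: "\<forall>g\<in>carrier J. \<forall>h\<in>carrier J. R (g \<otimes>\<^bsub>J\<^esub> h) = mat_mul A n (R g) (R h)" for R
    proof -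
      from bspec[OF R2 G.one_closed] obtain N where N0: "N \<in> mat_carrier A n"
        "mat_mul A n (R \<one>\<^bsub>J\<^esub>) N = mat_one A n \<and> mat_mul A n N (R \<one>\<^bsub>J\<^esub>) = mat_one A n" ..
      then have N: "N \<in> mat_carrier A n" "mat_mul A n (R \<one>\<^bsub>J\<^esub>) N = mat_one A n" by simp_all
      have r1: "R \<one>\<^bsub>J\<^esub> \<in> mat_carrier A n" using R1 by simp
      have "R (\<one>\<^bsub>J\<^esub> \<otimes>\<^bsub>J\<^esub> \<one>\<^bsub>J\<^esub>) = mat_mul A n (R \<one>\<^bsub>J\<^esub>) (R \<one>\<^bsub>J\<^esub>)"
        using bspec[OF bspec[OF R3 G.one_closed] G.one_closed] .
      then have rr: "R \<one>\<^bsub>J\<^esub> = mat_mul A n (R \<one>\<^bsub>J\<^esub>) (R \<one>\<^bsub>J\<^esub>)" by simp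
      have "mat_one A n = mat_mul A n (mat_mul A n (R \<one>\<^bsub>J\<^esub>) (R \<one>\<^bsub>J\<^esub>)) N" using N(2) rr by simp
      also have "\<dots> = mat_mul A n (R \<one>\<^bsub>J\<^esub>) (mat_one A n)" using r1 N by (simp add: assoc)
      also have "\<dots> = R \<one>\<^bsub>J\<^esub>" using A.mat_one_right[OF r1] .
      finally show ?thesis by simp
    qed
    show "\<Lambda> \<one>\<^bsub>J\<^esub> = mat_one A n" using gen[OF RL(1-3)] .
    show "\<Lambda>' \<one>\<^bsub>J\<^esub> = mat_one A n" using gen[OF RL'(1-3)] .
  qed
  define U where "U = {g\<in>carrier J. \<Lambda> g = mat_one A n \<and> \<Lambda>' g = mat_one A n}"
  have Uopen: "openin T U"
  proof -
    define S where "S j = {g\<in>carrier J. mat_vec A n (\<Lambda> g) (A.unitv n j) = A.unitv n j} \<inter>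
       {g\<in>carrier J. mat_vec A n (\<Lambda>' g) (A.unitv n j) = A.unitv n j}" for j
    have st: "subtopology T (carrier J) = T" unfolding top[symmetric] by simp
    have So: "openin T (S j)" for j
      unfolding S_def using bspec[OF RL(4) A.unitv_closed] bspec[OF RL'(4) A.unitv_closed] st
      by (intro openin_Int) simp_all
    have "U = \<Inter> (S ` {..<n})"
    proof
      show "U \<subseteq> \<Inter> (S ` {..<n})" unfolding U_def S_def using A.mat_vec_one A.unitv_closed by auto
      show "\<Inter> (S ` {..<n}) \<subseteq> U"
      proof
        fix g assume "g \<in> \<Inter> (S ` {..<n})"
        then have gS: "\<And>j. j < n \<Longrightarrow> g \<in> S j" by auto
        have gc: "g \<in> carrier J" using gS[of 0] npos unfolding S_def by auto
        have "\<Lambda> g = mat_one A n"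
          using A.mat_eq_by_unitv[OF Lc[OF gc] A.mat_one_closed] gS A.mat_vec_one[OF A.unitv_closed]
          unfolding S_def by auto
        moreover have "\<Lambda>' g = mat_one A n"
          using A.mat_eq_by_unitv[OF L'c[OF gc] A.mat_one_closed] gS A.mat_vec_one[OF A.unitv_closed]
          unfolding S_def by auto
        ultimately show "g \<in> U" unfolding U_def using gc by auto
      qed
    qed
    then show ?thesis using So npos by (auto intro!: openin_Inter)
  qed
  have \<chi>U: "\<chi> g = \<one>\<^bsub>A\<^esub>" if "g \<in> U" for g
  proof (rule \<chi>eq)
    show gc: "g \<in> carrier J" using that unfolding U_def by auto
    show "\<one>\<^bsub>A\<^esub> \<in> carrier A" by simp
    show "\<Lambda>' g = mat_smult A n \<one>\<^bsub>A\<^esub> (\<Lambda> g)" using that A.mat_smult_one[OF Lc[OF gc]] unfolding U_def by simp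
  qed
  have oneU: "\<one>\<^bsub>J\<^esub> \<in> U" unfolding U_def using one_rep by simp
  have kopen: "openin T {g\<in>carrier J. \<chi> g = \<one>\<^bsub>A\<^esub>}"
  proof (subst openin_subopen, intro ballI)
    fix g assume g: "g \<in> {g\<in>carrier J. \<chi> g = \<one>\<^bsub>A\<^esub>}"
    then have gc: "g \<in> carrier J" and g1: "\<chi> g = \<one>\<^bsub>A\<^esub>" by auto
    define V where "V = {x \<in> topspace T. inv\<^bsub>J\<^esub> g \<otimes>\<^bsub>J\<^esub> x \<in> U}"
    have cont: "continuous_map T T (\<lambda>x. inv\<^bsub>J\<^esub> g \<otimes>\<^bsub>J\<^esub> x)"
    proof -
      have "continuous_map T (prod_topology T T) (\<lambda>x. (inv\<^bsub>J\<^esub> g, id x))"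
        using gc top by (intro continuous_map_pairedI) auto
      from continuous_map_compose[OF this cmul] show ?thesis by (simp add: o_def)
    qed
    have Vo: "openin T V" unfolding V_def by (rule openin_continuous_map_preimage[OF cont Uopen])
    have gV: "g \<in> V" unfolding V_def using gc top oneU by simp
    have Vsub: "V \<subseteq> {g\<in>carrier J. \<chi> g = \<one>\<^bsub>A\<^esub>}"
    proof
      fix x assume "x \<in> V"
      then have xc: "x \<in> carrier J" and xu: "inv\<^bsub>J\<^esub> g \<otimes>\<^bsub>J\<^esub> x \<in> U" unfolding V_def using top by auto
      have xe: "g \<otimes>\<^bsub>J\<^esub> (inv\<^bsub>J\<^esub> g \<otimes>\<^bsub>J\<^esub> x) = x" using gc xc by (simp add: G.m_assoc[symmetric])
      have "\<chi> (g \<otimes>\<^bsub>J\<^esub> (inv\<^bsub>J\<^esub> g \<otimes>\<^bsub>J\<^esub> x)) = \<chi> g \<otimes>\<^bsub>A\<^esub> \<chi> (inv\<^bsub>J\<^esub> g \<otimes>\<^bsub>J\<^esub> x)"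
        by (rule \<chi>mult) (use gc xc in auto)
      then have "\<chi> x = \<chi> g \<otimes>\<^bsub>A\<^esub> \<chi> (inv\<^bsub>J\<^esub> g \<otimes>\<^bsub>J\<^esub> x)" unfolding xe .
      also have "\<dots> = \<one>\<^bsub>A\<^esub>" using g1 \<chi>U[OF xu] by simp
      finally show "x \<in> {g\<in>carrier J. \<chi> g = \<one>\<^bsub>A\<^esub>}" using xc by simp
    qed
    show "\<exists>T'. openin T T' \<and> g \<in> T' \<and> T' \<subseteq> {g\<in>carrier J. \<chi> g = \<one>\<^bsub>A\<^esub>}"
      by (intro exI[of _ V] conjI Vo gV Vsub)
  qed
  have sc: "smooth_char_quot J T A J1 \<chi>"
    unfolding smooth_char_quot_def using \<chi>unit \<chi>mult \<chi>J1 kopen by (intro conjI ballI) simp_all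
  have oneGL: "mat_one A n \<in> GL A n"
    unfolding GL_def using A.mat_one_closed A.mat_one_left[OF A.mat_one_closed]
    by (intro CollectI conjI bexI[of _ "mat_one A n"]) simp_all
  have "\<forall>g\<in>carrier J. mat_mul A n (mat_one A n) (\<Lambda>' g) = mat_mul A n (mat_smult A n (\<chi> g) (\<Lambda> g)) (mat_one A n)"
  proof
    fix g assume g: "g \<in> carrier J"
    have cg: "\<chi> g \<in> carrier A" using \<chi> g by auto
    show "mat_mul A n (mat_one A n) (\<Lambda>' g) = mat_mul A n (mat_smult A n (\<chi> g) (\<Lambda> g)) (mat_one A n)"
      using A.mat_one_left[OF L'c[OF g]] A.mat_one_right[OF A.mat_smult_closed[OF cg Lc[OF g]]] \<chi>[OF g] by simp
  qed
  then show ?thesis by (intro exI[of _ \<chi>] conjI sc bexI[OF _ oneGL])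
qed

end
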